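(* Let $n\ge 2$ and $g\ge 3$, and let $\mathcal M^{\mathrm o}_g(n)$ be the number of MAB pairs $(u,v)$ of binary words with $|u|=|v|=n$ and $\mathrm{lsb}(u,v)+\mathrm{lsb}(v,u)-n=g$. Then $$\mathcal M^{\mathrm o}_g(n)=2\sum_{i=g+1}^{n-1}\ \sum_{l_2=0}^{n-i-2}\ \sum_{l_1=l_2+2}^{n-i}\ \sum_{k=l_1}^{g+l_2}\ \sum_{m=k'}^{n-j+k}\frac{l_1-l_2}{n-i}\binom{n-i}{l_1}\binom{n-i}{l_2}\cdot{}_{A_{l_2}}N_{A_{l_1}}^{A_k}\cdot\frac{l_1-l_2}{n-j}\binom{n-j}{m-k}\binom{n-j}{m-k'},$$ where in each term $j=n+g-i$, $k'=k+l_1-l_2$, $A_{l_1}=(l_1,n-i-l_1)$, $A_{l_2}=(l_2,n-i-l_2)$ and $A_k=(k,j-k)$ (empty sums are $0$).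
   Context: Let $\Sigma=\{a,b\}$. For a word $w$ and a letter $c$, $|w|_c$ denotes the number of occurrences of $c$ in $w$. Two words $x,y$ are abelian equivalent, written $x\sim_{\mathrm{abl}}y$, if $|x|_c=|y|_c$ for all $c\in\Sigma$. For words $u,v$: a pair $(x,y)$ is an internal abelian-border of $(u,v)$ if $x$ is a nonempty proper suffix of $u$, $y$ is a proper prefix of $v$, and $x\sim_{\mathrm{abl}}y$; it is an external abelian-border of $(u,v)$ if $x$ is a nonempty proper prefix of $u$, $y$ is a proper suffix of $v$, and $x\sim_{\mathrm{abl}}y$. The pair $(u,v)$ is mutually abelian-bordered (MAB) if it has both an internal and an external abelian-border, and mutually abelian-unbordered (MAU) if it has neither. If $(u,v)$ has an internal abelian-border, $\mathrm{sb}(u,v)$ denotes its internal abelian-border $(x,y)$ of minimal length and $\mathrm{lsb}(u,v)=|x|$ is that minimal length. A lattice path is a finite sequence of points of $\mathbb Z^2$ in which each consecutive difference is $(1,0)$ (an east step) or $(0,1)$ (a north step). The word $w(p)\in\Sigma^*$ of a lattice path $p$ records its steps in order, writing $a$ for an east step and $b$ for a north step; conversely, for a point $A\in\mathbb Z^2$ and a word $w$, $p_A(w)$ is the lattice path starting at $A$ whose word is $w$. For lattice paths $p,q$, $p\cap q$ denotes the set of lattice points lying on both. For distinct lattice points $A,B,C$, ${}_{A}\mathcal N_{B}^{C}$ is the set of triples $(p,q,p')$ where $p$ is a lattice path from $A$ to $C$, $q$ is a lattice path from $B$ to $C$, $p'=p_B(w(p))$, $p\cap q=\{C\}$ and $q\cap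 p'=\{B\}$; and ${}_{A}N_{B}^{C}=|{}_{A}\mathcal N_{B}^{C}|$. Binomial coefficients $\binom{N}{r}$ are $0$ when $r<0$ or $r>N$. *)

theory Defs
  imports Complex_Main
begin

datatype letter = La | Lb

type_synonym word = "letter list"

definition abel_eq :: "word \<Rightarrow> word \<Rightarrow> bool" where
  "abel_eq x y \<longleftrightarrow> (\<forall>c. count_list x c = count_list y c)"

definition is_suffix_of :: "word \<Rightarrow> word \<Rightarrow> bool" where
  "is_suffix_of x u \<longleftrightarrow> (\<exists>z. u = z @ x)"

definition is_prefix_of :: "word \<Rightarrow> word \<Rightarrow> bool" where
  "is_prefix_of y v \<longleftrightarrow> (\<exists>z. v = y @ z)"

definition int_border :: "word \<Rightarrow> word \<Rightarrow> word \<Rightarrow> word \<Rightarrow> bool" where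
  "int_border u v x y \<longleftrightarrow>
     x \<noteq> [] \<and> is_suffix_of x u \<and> length x < length u \<and>
     is_prefix_of y v \<and> length y < length v \<and> abel_eq x y"

definition ext_border :: "word \<Rightarrow> word \<Rightarrow> word \<Rightarrow> word \<Rightarrow> bool" where
  "ext_border u v x y \<longleftrightarrow>
     x \<noteq> [] \<and> is_prefix_of x u \<and> length x < length u \<and>
     is_suffix_of y v \<and> length y < length v \<and> abel_eq x y"

definition MAB :: "word \<Rightarrow> word \<Rightarrow> bool" where
  "MAB u v \<longleftrightarrow> (\<exists>x y. int_border u v x y) \<and> (\<exists>x y. ext_border u v x y)"

text \<open>Length of the shortest internal abelian-border (meaningful when one exists).\<close>
definition lsb :: "word \<Rightarrow> word \<Rightarrow> nat" where
  "lsb u v = (LEAST l. \<exists>x y. int_border u v x y \<and> length x = l)"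

type_synonym point = "int \<times> int"

definition is_step :: "point \<Rightarrow> point \<Rightarrow> bool" where
  "is_step P Q \<longleftrightarrow> Q = (fst P + 1, snd P) \<or> Q = (fst P, snd P + 1)"

definition lattice_path :: "point list \<Rightarrow> bool" where
  "lattice_path p \<longleftrightarrow> p \<noteq> [] \<and> (\<forall>i. Suc i < length p \<longrightarrow> is_step (p ! i) (p ! Suc i))"

definition step_letter :: "point \<Rightarrow> point \<Rightarrow> letter" where
  "step_letter P Q = (if Q = (fst P + 1, snd P) then La else Lb)"

definition path_word :: "point list \<Rightarrow> word" where
  "path_word p = map (\<lambda>i. step_letter (p ! i) (p ! Suc i)) [0..<length p - 1]"

fun path_from :: "point \<Rightarrow> word \<Rightarrow> point list" where
  "path_from A [] = [A]"
| "path_from A (La # w) = A # path_from (fst A + 1, snd A) w"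
| "path_from A (Lb # w) = A # path_from (fst A, snd A + 1) w"

definition path_between :: "point list \<Rightarrow> point \<Rightarrow> point \<Rightarrow> bool" where
  "path_between p A C \<longleftrightarrow> lattice_path p \<and> hd p = A \<and> last p = C"

definition Nset :: "point \<Rightarrow> point \<Rightarrow> point \<Rightarrow> (point list \<times> point list \<times> point list) set" where
  "Nset A B C = {(p, q, p'). path_between p A C \<and> path_between q B C \<and>
       p' = path_from B (path_word p) \<and> set p \<inter> set q = {C} \<and> set q \<inter> set p' = {B}}"

definition Ncount :: "point \<Rightarrow> point \<Rightarrow> point \<Rightarrow> nat" where
  "Ncount A B C = card (Nset A B C)"

definition binom :: "int \<Rightarrow> int \<Rightarrow> real" where
  "binom N r = (if 0 \<le> r \<and> r \<le> N then real (nat N choose nat r) else 0)"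

definition Mo :: "nat \<Rightarrow> nat \<Rightarrow> nat" where
  "Mo g n = card {(u, v). length u = n \<and> length v = n \<and> MAB u v \<and>
       int (lsb u v) + int (lsb v u) - int n = int g}"

end

theory Submission
  imports Defs
begin



abbreviation cnt :: "word \<Rightarrow> nat" where "cnt w \<equiv> count_list w La"

lemma UNIV_letter: "(UNIV :: letter set) = {La, Lb}"
  using letter.exhaust by auto

lemma finite_words: "finite {w::word. length w = N}"
proof -
  have "finite {xs. set xs \<subseteq> (UNIV::letter set) \<and> length xs = N}"
    by (rule finite_lists_length_eq) (simp add: UNIV_letter)
  then show ?thesis by simp
qed

definition Good :: "nat \<Rightarrow> int \<Rightarrow> int \<Rightarrow> (word \<times> word) set" where
"Good N c1 c2 = {(x,y). length x = N \<and> length y = N \<and> int (cnt x) = c1 \<and> int (cnt y) = c2 \<and>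
   (\<forall>l\<in>{1..N}. cnt (take l y) < cnt (take l x))}"

lemma finite_Good: "finite (Good N c1 c2)"
  by (rule finite_subset[of _ "{x. length x = N} \<times> {y. length y = N}"])
     (auto simp: Good_def finite_words)

definition dl :: "letter \<Rightarrow> int" where "dl c = (if c = La then 1 else 0)"

lemma Good_Suc:
  assumes "c2 < c1"
  shows "Good (Suc N) c1 c2 = (\<Union>ab\<in>{(a,b). True}. (\<lambda>(x,y). (x@[fst ab], y@[snd ab])) ` Good N (c1 - dl (fst ab)) (c2 - dl (snd ab)))"
proof (rule set_eqI, rule iffI)
  fix z assume z: "z \<in> Good (Suc N) c1 c2"
  obtain x' y' where zz: "z = (x', y')" by force
  from z zz have lx: "length x' = Suc N" and ly: "length y' = Suc N" by (auto simp: Good_def)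
  obtain x a where xa: "x' = x @ [a]" using lx by (metis length_Suc_conv_rev)
  obtain y b where yb: "y' = y @ [b]" using ly by (metis length_Suc_conv_rev)
  have "(x,y) \<in> Good N (c1 - dl a) (c2 - dl b)"
  proof -
    have A: "\<forall>l\<in>{1..Suc N}. cnt (take l y') < cnt (take l x')" using z zz by (auto simp: Good_def)
    have "\<forall>l\<in>{1..N}. cnt (take l y) < cnt (take l x)"
    proof
      fix l assume l: "l \<in> {1..N}"
      then have "cnt (take l y') < cnt (take l x')" using A by auto
      moreover have "take l y' = take l y" "take l x' = take l x" using l lx ly xa yb by auto
      ultimately show "cnt (take l y) < cnt (take l x)" by simp
    qed
    then show ?thesis using z zz xa yb lx ly by (auto simp: Good_def dl_def)
  qed
  then show "z \<in> (\<Union>ab\<in>{(a,b). True}. (\<lambda>(x,y). (x@[fst ab], y@[snd ab])) ` Good N (c1 - dl (fst ab)) (c2 - dl (snd ab)))"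
    using zz xa yb by (auto intro!: bexI[of _ "(a,b)"] image_eqI[of _ _ "(x,y)"])
next
  fix z assume "z \<in> (\<Union>ab\<in>{(a,b). True}. (\<lambda>(x,y). (x@[fst ab], y@[snd ab])) ` Good N (c1 - dl (fst ab)) (c2 - dl (snd ab)))"
  then obtain a b x y where zz: "z = (x@[a], y@[b])" and g: "(x,y) \<in> Good N (c1 - dl a) (c2 - dl b)" by auto
  have lx: "length x = N" and ly: "length y = N" using g by (auto simp: Good_def)
  have cx: "int (cnt (x@[a])) = c1" and cy: "int (cnt (y@[b])) = c2" using g by (auto simp: Good_def dl_def)
  have "\<forall>l\<in>{1..Suc N}. cnt (take l (y@[b])) < cnt (take l (x@[a]))"
  proof
    fix l assume l: "l \<in> {1..Suc N}"
    show "cnt (take l (y@[b])) < cnt (take l (x@[a]))"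
    proof (cases "l = Suc N")
      case True
      then show ?thesis using lx ly cx cy assms by simp
    next
      case False
      then have "l \<in> {1..N}" using l by auto
      then show ?thesis using g lx ly by (auto simp: Good_def)
    qed
  qed
  then show "z \<in> Good (Suc N) c1 c2" using zz lx ly cx cy by (simp add: Good_def)
qed

lemma UNIV_letter2: "(UNIV :: (letter \<times> letter) set) = {(La,La),(La,Lb),(Lb,La),(Lb,Lb)}"
  using letter.exhaust by auto

lemma card_Good_Suc:
  assumes "c2 < c1"
  shows "card (Good (Suc N) c1 c2) = card (Good N (c1-1) (c2-1)) + card (Good N (c1-1) c2)
     + card (Good N c1 (c2-1)) + card (Good N c1 c2)"
proof -
  let ?F = "\<lambda>ab. (\<lambda>(x,y). (x@[fst ab], y@[snd ab])) ` Good N (c1 - dl (fst ab)) (c2 - dl (snd ab))"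
  have "card (Good (Suc N) c1 c2) = card (\<Union>ab\<in>UNIV. ?F ab)"
    using Good_Suc[OF assms] by simp
  also have "\<dots> = (\<Sum>ab\<in>UNIV. card (?F ab))"
  proof (rule card_UN_disjoint)
    show "finite (UNIV :: (letter \<times> letter) set)" by (simp add: UNIV_letter2)
    show "\<forall>i\<in>UNIV. finite (?F i)" using finite_Good by blast
    show "\<forall>i\<in>UNIV. \<forall>j\<in>UNIV. i \<noteq> j \<longrightarrow> ?F i \<inter> ?F j = {}" by auto
  qed
  also have "\<dots> = (\<Sum>ab\<in>UNIV. card (Good N (c1 - dl (fst ab)) (c2 - dl (snd ab))))"
  proof (rule sum.cong[OF refl])
    fix ab :: "letter \<times> letter"
    show "card (?F ab) = card (Good N (c1 - dl (fst ab)) (c2 - dl (snd ab)))"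
      by (rule card_image) (auto simp: inj_on_def)
  qed
  also have "\<dots> = card (Good N (c1-1) (c2-1)) + card (Good N (c1-1) c2)
     + card (Good N c1 (c2-1)) + card (Good N c1 c2)"
    by (simp add: UNIV_letter2 dl_def)
  finally show ?thesis .
qed

lemma Good_le: "N \<ge> 1 \<Longrightarrow> c1 \<le> c2 \<Longrightarrow> Good N c1 c2 = {}"
  by (force simp: Good_def)

lemma Good_0: "Good 0 c1 c2 = (if c1 = 0 \<and> c2 = 0 then {([],[])} else {})"
  by (auto simp: Good_def)


lemma binom_Suc: "N \<ge> 0 \<Longrightarrow> binom (N+1) r = binom N r + binom N (r-1)"
proof -
  assume N: "N \<ge> 0"
  show ?thesis
  proof (cases "r \<le> 0")
    case True
    then show ?thesis using N by (auto simp: binom_def)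
  next
    case False
    define r' where "r' = nat (r - 1)"
    have r': "r = int r' + 1" using False by (simp add: r'_def)
    obtain N' where N': "N = int N'" using N nonneg_int_cases by blast
    have "nat (int N' + 1) = Suc N'" by simp
    moreover have "nat r = Suc r'" using r' by simp
    ultimately show ?thesis using N' r' by (auto simp: binom_def)
  qed
qed


lemma binom_abs1: "N \<ge> 0 \<Longrightarrow> real_of_int r * binom (N+1) r = real_of_int (N+1) * binom N (r-1)"
proof -
  assume N: "N \<ge> 0"
  show ?thesis
  proof (cases "r \<le> 0")
    case True
    then show ?thesis using N by (auto simp: binom_def)
  next
    case False
    define r' where "r' = nat (r - 1)"
    have r': "r = int r' + 1" using False by (simp add: r'_def)
    obtain N' where N': "N = int N'" using N nonneg_int_cases by blast
    have "nat (int N' + 1) = Suc N'" by simp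
    moreover have "nat r = Suc r'" using r' by simp
    moreover have "real (Suc r') * real (Suc N' choose Suc r') = real (Suc N') * real (N' choose r')"
      by (metis Suc_times_binomial of_nat_mult)
    ultimately show ?thesis using N' r' by (auto simp: binom_def) (simp_all add: algebra_simps)
  qed
qed


lemma binom_abs2: "N \<ge> 0 \<Longrightarrow> real_of_int (N + 1 - r) * binom (N+1) r = real_of_int (N+1) * binom N r"
proof -
  assume N: "N \<ge> 0"
  show ?thesis
  proof (cases "r < 0 \<or> r > N")
    case True
    then show ?thesis using N by (auto simp: binom_def)
  next
    case False
    define r' where "r' = nat r"
    have r': "r = int r'" using False by (simp add: r'_def)
    obtain N' where N': "N = int N'" using N nonneg_int_cases by blast
    have rN: "r' \<le> N'" using False r' N' by simp
    have e1: "nat (int N' + 1) = Suc N'" by simp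
    have "(Suc N' - r') * (Suc N' choose r') = Suc N' * (N' choose r')"
      using binomial_absorb_comp[of "Suc N'" r'] by simp
    then have e2: "real (Suc N' - r') * real (Suc N' choose r') = real (Suc N') * real (N' choose r')"
      by (metis of_nat_mult)
    have e3: "real_of_int (int N' + 1 - int r') = real (Suc N' - r')" using rN by (simp add: of_nat_diff)
    show ?thesis unfolding binom_def using N' r' rN e1 e2 e3 by (simp add: algebra_simps)
  qed
qed

lemma ballot_alg:
  fixes K c1 c2 a a' b b' :: real
  assumes h1: "c1*(a+a') = K*a'" and h2: "c2*(b+b') = K*b'"
  shows "K*((c1-c2)*a'*b' + (c1-1-c2)*a'*b + (c1-c2+1)*a*b' + (c1-c2)*a*b) = (K-1)*(c1-c2)*(a+a')*(b+b')"
  using h1 h2 by algebra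

lemma ballot_base:
  assumes "c2 < c1"
  shows "real (card (Good (Suc 0) c1 c2)) = real_of_int (c1 - c2) * binom 1 c1 * binom 1 c2"
proof -
  have "card (Good (Suc 0) c1 c2) = (if c1 = 1 \<and> c2 = 0 then 1 else 0)"
    using card_Good_Suc[OF assms, of 0] assms by (auto simp: Good_0)
  moreover have "real_of_int (c1 - c2) * binom 1 c1 * binom 1 c2 = (if c1 = 1 \<and> c2 = 0 then 1 else 0)"
  proof (cases "c1 = 1 \<and> c2 = 0")
    case True
    then show ?thesis by (simp add: binom_def)
  next
    case False
    then have "c1 < 0 \<or> c1 > 1 \<or> c2 < 0 \<or> c2 > 1 \<or> c1 = c2" using assms by auto
    then show ?thesis using False by (auto simp: binom_def)
  qed
  ultimately show ?thesis by simp
qed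

lemma ballot:
  assumes "N \<ge> 1"
  shows "c2 \<le> c1 \<Longrightarrow> real N * real (card (Good N c1 c2)) = real_of_int (c1 - c2) * binom (int N) c1 * binom (int N) c2"
  using assms
proof (induction N arbitrary: c1 c2 rule: nat_induct_at_least)
  case base
  show ?case
  proof (cases "c1 = c2")
    case True then show ?thesis using Good_le[of 1 c1 c2] by simp
  next
    case False
    then show ?thesis using ballot_base[of c2 c1] base by simp
  qed
next
  case (Suc N)
  show ?case
  proof (cases "c1 = c2")
    case True then show ?thesis using Good_le[of "Suc N" c1 c2] by simp
  next
    case False
    then have lt: "c2 < c1" using Suc.prems by simp
    define a where "a = binom (int N) c1"
    define a' where "a' = binom (int N) (c1-1)"
    define b where "b = binom (int N) c2"
    define b' where "b' = binom (int N) (c2-1)"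
    have eS: "int (Suc N) = int N + 1" by simp
    have B1: "binom (int N + 1) c1 = a + a'" using binom_Suc[of "int N" c1] by (simp add: a_def a'_def)
    have B2: "binom (int N + 1) c2 = b + b'" using binom_Suc[of "int N" c2] by (simp add: b_def b'_def)
    have h1: "real_of_int c1 * (a + a') = real (Suc N) * a'"
      using binom_abs1[of "int N" c1] unfolding B1 a'_def by (simp add: algebra_simps)
    have h2: "real_of_int c2 * (b + b') = real (Suc N) * b'"
      using binom_abs1[of "int N" c2] unfolding B2 b'_def by (simp add: algebra_simps)
    have i1: "real N * card (Good N (c1-1) (c2-1)) = real_of_int (c1-c2) * a' * b'"
      using Suc.IH[of "c2-1" "c1-1"] lt by (simp add: a'_def b'_def)
    have i2: "real N * card (Good N (c1-1) c2) = (real_of_int c1 - 1 - real_of_int c2) * a' * b"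
      using Suc.IH[of "c2" "c1-1"] lt by (simp add: a'_def b_def)
    have i3: "real N * card (Good N c1 (c2-1)) = (real_of_int c1 - real_of_int c2 + 1) * a * b'"
      using Suc.IH[of "c2-1" "c1"] lt by (simp add: a_def b'_def)
    have i4: "real N * card (Good N c1 c2) = real_of_int (c1-c2) * a * b"
      using Suc.IH[of "c2" "c1"] lt by (simp add: a_def b_def)
    have alg: "real (Suc N) * ((real_of_int c1 - real_of_int c2)*a'*b' + (real_of_int c1-1-real_of_int c2)*a'*b
       + (real_of_int c1-real_of_int c2+1)*a*b' + (real_of_int c1-real_of_int c2)*a*b)
       = (real (Suc N)-1)*(real_of_int c1-real_of_int c2)*(a+a')*(b+b')"
      by (rule ballot_alg[OF h1 h2])
    have cs: "card (Good (Suc N) c1 c2) = card (Good N (c1-1) (c2-1)) + card (Good N (c1-1) c2)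
     + card (Good N c1 (c2-1)) + card (Good N c1 c2)" by (rule card_Good_Suc[OF lt])
    have "real N * (real (Suc N) * real (card (Good (Suc N) c1 c2)))
       = real (Suc N) * (real N * card (Good N (c1-1) (c2-1)) + real N * card (Good N (c1-1) c2)
         + real N * card (Good N c1 (c2-1)) + real N * card (Good N c1 c2))"
      unfolding cs by (simp add: algebra_simps)
    also have "\<dots> = real N * (real_of_int (c1 - c2) * binom (int (Suc N)) c1 * binom (int (Suc N)) c2)"
      unfolding i1 i2 i3 i4 eS B1 B2 using alg by (simp add: algebra_simps)
    finally show ?thesis using Suc.hyps by simp
  qed
qed




definition ptf :: "point \<Rightarrow> word \<Rightarrow> nat \<Rightarrow> point" where
 "ptf A w t = (fst A + int (cnt (take t w)), snd A + int t - int (cnt (take t w)))"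

lemma length_path_from: "length (path_from A w) = Suc (length w)"
  by (induction A w rule: path_from.induct) auto

lemma hd_path_from: "hd (path_from A w) = A"
  by (cases w) (auto, case_tac a, auto)

lemma nth_path_from: "t \<le> length w \<Longrightarrow> path_from A w ! t = ptf A w t"
proof (induction A w arbitrary: t rule: path_from.induct)
  case (1 A)
  then show ?case by (simp add: ptf_def)
next
  case (2 A w)
  then show ?case by (cases t) (auto simp: ptf_def)
next
  case (3 A w)
  then show ?case by (cases t) (auto simp: ptf_def)
qed

lemma path_from_ne: "path_from A w \<noteq> []"
  using length_path_from[of A w] by auto

lemma last_path_from: "last (path_from A w) = ptf A w (length w)"
  using path_from_ne[of A w] by (simp add: last_conv_nth length_path_from nth_path_from del: path_from.simps)

lemma set_path_from: "set (path_from A w) = {ptf A w t | t. t \<le> length w}"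
proof -
  have "set (path_from A w) = {path_from A w ! t | t. t < Suc (length w)}"
    by (simp add: set_conv_nth length_path_from del: path_from.simps)
  also have "\<dots> = {ptf A w t | t. t \<le> length w}"
    using nth_path_from[of _ w A] by (auto simp: less_Suc_eq_le simp del: path_from.simps) metis+
  finally show ?thesis .
qed

lemma path_word_Cons2: "path_word (P # Q # r) = step_letter P Q # path_word (Q # r)"
proof -
  have "[0..<length (P # Q # r) - 1] = 0 # map Suc [0..<length (Q # r) - 1]"
    by (simp add: upt_conv_Cons map_Suc_upt del: upt_Suc)
  then show ?thesis unfolding path_word_def by simp
qed

lemma path_word_Cons: "p \<noteq> [] \<Longrightarrow> path_word (P # p) = step_letter P (hd p) # path_word p"
  by (cases p) (auto simp: path_word_Cons2)

lemma path_word_single: "path_word [P] = []"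
  by (simp add: path_word_def)

lemma path_word_path_from: "path_word (path_from A w) = w"
proof (induction A w rule: path_from.induct)
  case (1 A)
  then show ?case by (simp add: path_word_single)
next
  case (2 A w)
  then show ?case using path_from_ne by (simp add: path_word_Cons hd_path_from step_letter_def)
next
  case (3 A w)
  then show ?case using path_from_ne by (simp add: path_word_Cons hd_path_from step_letter_def)
qed

lemma lattice_path_Cons2: "lattice_path (P # Q # r) \<longleftrightarrow> is_step P Q \<and> lattice_path (Q # r)"
proof
  assume h: "lattice_path (P # Q # r)"
  have "is_step P Q" using h unfolding lattice_path_def by force
  moreover have "lattice_path (Q # r)"
    unfolding lattice_path_def
  proof (intro conjI allI impI)
    fix i assume "Suc i < length (Q # r)"
    then have "is_step ((P # Q # r) ! Suc i) ((P # Q # r) ! Suc (Suc i))" using h unfolding lattice_path_def by auto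
    then show "is_step ((Q # r) ! i) ((Q # r) ! Suc i)" by simp
  qed simp
  ultimately show "is_step P Q \<and> lattice_path (Q # r)" by simp
next
  assume h: "is_step P Q \<and> lattice_path (Q # r)"
  show "lattice_path (P # Q # r)"
    unfolding lattice_path_def
  proof (intro conjI allI impI)
    fix i assume i: "Suc i < length (P # Q # r)"
    show "is_step ((P # Q # r) ! i) ((P # Q # r) ! Suc i)"
    proof (cases i)
      case 0 then show ?thesis using h by simp
    next
      case (Suc i')
      then show ?thesis using h i unfolding lattice_path_def by auto
    qed
  qed simp
qed

lemma lattice_path_path_from: "lattice_path (path_from A w)"
proof (induction A w rule: path_from.induct)
  case (1 A)
  then show ?case by (simp add: lattice_path_def)
next
  case (2 A w)
  then show ?case by (cases w) (auto simp: lattice_path_Cons2 is_step_def, case_tac a, auto simp: lattice_path_Cons2 is_step_def)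
next
  case (3 A w)
  then show ?case by (cases w) (auto simp: lattice_path_Cons2 is_step_def, case_tac a, auto simp: lattice_path_Cons2 is_step_def)
qed

lemma path_from_path_word: "lattice_path p \<Longrightarrow> p = path_from (hd p) (path_word p)"
proof (induction p rule: induct_list012)
  case 1
  then show ?case by (simp add: lattice_path_def)
next
  case (2 x)
  then show ?case by (simp add: path_word_single)
next
  case (3 P Q r)
  then have st: "is_step P Q" and lp: "lattice_path (Q # r)" by (auto simp: lattice_path_Cons2)
  have IH: "Q # r = path_from Q (path_word (Q # r))" using 3 lp by simp
  show ?case
  proof (cases "Q = (fst P + 1, snd P)")
    case True
    then show ?thesis using IH by (simp add: path_word_Cons2 step_letter_def)
  next
    case False
    then have "Q = (fst P, snd P + 1)" using st by (simp add: is_step_def)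
    then show ?thesis using IH False by (simp add: path_word_Cons2 step_letter_def)
  qed
qed




lemma sign_fwd:
  fixes f :: "nat \<Rightarrow> int"
  assumes step: "\<And>t. a \<le> t \<Longrightarrow> t < b \<Longrightarrow> f (Suc t) \<le> f t + 1 \<and> f t \<le> f (Suc t) + 1"
    and nz: "\<And>t. a \<le> t \<Longrightarrow> t \<le> b \<Longrightarrow> f t \<noteq> 0"
    and pos: "f a > 0" and ab: "a \<le> b"
  shows "f b > 0"
  using ab step nz
proof (induction b rule: dec_induct)
  case base then show ?case using pos by simp
next
  case (step m)
  then have "f m > 0" by auto
  moreover have "f (Suc m) \<ge> f m - 1" using step.prems(1)[of m] step.hyps by auto
  moreover have "f (Suc m) \<noteq> 0" using step.prems(2)[of "Suc m"] step.hyps by auto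
  ultimately show ?case by linarith
qed

lemma sign_iff:
  fixes f :: "nat \<Rightarrow> int"
  assumes step: "\<And>t. a \<le> t \<Longrightarrow> t < b \<Longrightarrow> f (Suc t) \<le> f t + 1 \<and> f t \<le> f (Suc t) + 1"
    and nz: "\<And>t. a \<le> t \<Longrightarrow> t \<le> b \<Longrightarrow> f t \<noteq> 0"
    and ab: "a \<le> b"
  shows "f a > 0 \<longleftrightarrow> f b > 0"
proof
  assume "f a > 0" then show "f b > 0" using sign_fwd[of a b f] step nz ab by blast
next
  assume b: "f b > 0"
  show "f a > 0"
  proof (rule ccontr)
    assume "\<not> f a > 0"
    then have "(\<lambda>t. - f t) a > 0" using nz[of a] ab by simp
    moreover have "\<And>t. a \<le> t \<Longrightarrow> t < b \<Longrightarrow> (\<lambda>t. - f t) (Suc t) \<le> (\<lambda>t. - f t) t + 1 \<and> (\<lambda>t. - f t) t \<le> (\<lambda>t. - f t) (Suc t) + 1"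
      using step by force
    moreover have "\<And>t. a \<le> t \<Longrightarrow> t \<le> b \<Longrightarrow> (\<lambda>t. - f t) t \<noteq> 0" using nz by force
    ultimately have "(\<lambda>t. - f t) b > 0" using sign_fwd[of a b "\<lambda>t. - f t"] ab by blast
    then show False using b by simp
  qed
qed

lemma cnt_take_Suc: "cnt (take (Suc t) w) \<le> cnt (take t w) + 1 \<and> cnt (take t w) \<le> cnt (take (Suc t) w)"
proof (cases "t < length w")
  case True
  then show ?thesis by (simp add: take_Suc_conv_app_nth)
next
  case False
  then show ?thesis by simp
qed

lemma cnt_take_le: "cnt (take t w) \<le> t"
  by (metis count_le_length length_take min.bounded_iff nat_le_linear)

lemma diff_step:
  fixes a b :: int
  shows "a + int (cnt (take (Suc t) x)) - (b + int (cnt (take (Suc t) y))) \<le> a + int (cnt (take t x)) - (b + int (cnt (take t y))) + 1 \<and>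
   a + int (cnt (take t x)) - (b + int (cnt (take t y))) \<le> a + int (cnt (take (Suc t) x)) - (b + int (cnt (take (Suc t) y))) + 1"
proof -
  have "cnt (take (Suc t) x) \<le> cnt (take t x) + 1" "cnt (take t x) \<le> cnt (take (Suc t) x)"
    "cnt (take (Suc t) y) \<le> cnt (take t y) + 1" "cnt (take t y) \<le> cnt (take (Suc t) y)"
    using cnt_take_Suc by auto
  then show ?thesis by linarith
qed

lemma ptf_level: "fst (ptf A w t) + snd (ptf A w t) = fst A + snd A + int t"
  by (simp add: ptf_def)

lemma ptf_eq_iff:
  assumes "fst A + snd A = fst B + snd B"
  shows "ptf A w t = ptf B w' t \<longleftrightarrow> fst A + int (cnt (take t w)) = fst B + int (cnt (take t w'))"
  using assms by (auto simp: ptf_def)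

lemma ptf_0: "ptf A w 0 = A" by (simp add: ptf_def)

lemma ptf_end: "ptf A w (length w) = (fst A + int (cnt w), snd A + int (length w) - int (cnt w))"
  by (simp add: ptf_def)

definition MidK :: "nat \<Rightarrow> int \<Rightarrow> int \<Rightarrow> int \<Rightarrow> (word \<times> word) set" where
 "MidK g l1 l2 k = {(mu,mv). length mu = g \<and> length mv = g \<and> l2 + int (cnt mu) = k \<and> l1 + int (cnt mv) = k \<and>
   (\<forall>t\<in>{1..<g}. l2 + int (cnt (take t mu)) < l1 + int (cnt (take t (rev mv))) \<and>
      cnt (take t (rev mv)) < cnt (take t mu))}"

lemma path_between_pf:
  assumes "path_between p A C"
  shows "p = path_from A (path_word p)" "ptf A (path_word p) (length (path_word p)) = C"
proof -
  have lp: "lattice_path p" and h: "hd p = A" and l: "last p = C" using assms by (auto simp: path_between_def)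
  show e: "p = path_from A (path_word p)" using path_from_path_word[OF lp] h by simp
  show "ptf A (path_word p) (length (path_word p)) = C" using l e last_path_from by metis
qed

lemma Nset_eq:
  fixes l1 l2 k N1 :: int and g :: nat
  assumes lt: "l2 < l1"
  shows "Nset (l2, N1 - l2) (l1, N1 - l1) (k, N1 + int g - k) =
    (\<lambda>(mu,mv). (path_from (l2, N1 - l2) mu, path_from (l1, N1 - l1) (rev mv), path_from (l1, N1 - l1) mu)) ` MidK g l1 l2 k"
    (is "Nset ?A ?B ?C = ?F ` _")
proof (rule set_eqI, rule iffI)
  fix z assume z: "z \<in> Nset ?A ?B ?C"
  then obtain p q p' where zz: "z = (p, q, p')" and pb: "path_between p ?A ?C" and qb: "path_between q ?B ?C"
    and pp: "p' = path_from ?B (path_word p)" and i1: "set p \<inter> set q = {?C}" and i2: "set q \<inter> set p' = {?B}"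
    unfolding Nset_def by auto
  define mu where "mu = path_word p"
  define w where "w = path_word q"
  define mv where "mv = rev w"
  have p: "p = path_from ?A mu" and pe: "ptf ?A mu (length mu) = ?C" using path_between_pf[OF pb] by (auto simp: mu_def)
  have q: "q = path_from ?B w" and qe: "ptf ?B w (length w) = ?C" using path_between_pf[OF qb] by (auto simp: w_def)
  have cmu: "l2 + int (cnt mu) = k" and lmu: "length mu = g" using pe by (auto simp: ptf_end)
  have cw: "l1 + int (cnt w) = k" and lw: "length w = g" using qe by (auto simp: ptf_end)
  have p': "p' = path_from ?B mu" using pp by (simp add: mu_def)
  have lev: "fst ?A + snd ?A = fst ?B + snd ?B" by simp
  have step1: "\<And>t. (\<lambda>t. l1 + int (cnt (take t w)) - (l2 + int (cnt (take t mu)))) (Suc t) \<le> (\<lambda>t. l1 + int (cnt (take t w)) - (l2 + int (cnt (take t mu)))) t + 1 \<and>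
       (\<lambda>t. l1 + int (cnt (take t w)) - (l2 + int (cnt (take t mu)))) t \<le> (\<lambda>t. l1 + int (cnt (take t w)) - (l2 + int (cnt (take t mu)))) (Suc t) + 1"
    using diff_step[of l1 _ w l2 mu] by simp
  have step2: "\<And>t. (\<lambda>t. int (cnt (take t mu)) - int (cnt (take t w))) (Suc t) \<le> (\<lambda>t. int (cnt (take t mu)) - int (cnt (take t w))) t + 1 \<and>
       (\<lambda>t. int (cnt (take t mu)) - int (cnt (take t w))) t \<le> (\<lambda>t. int (cnt (take t mu)) - int (cnt (take t w))) (Suc t) + 1"
    using diff_step[of 0 _ mu 0 w] by simp
  have A: "l2 + int (cnt (take t mu)) < l1 + int (cnt (take t w))" if t: "t < g" for t
  proof -
    have nz: "l1 + int (cnt (take s w)) - (l2 + int (cnt (take s mu))) \<noteq> 0" if s: "0 \<le> s" "s \<le> t" for s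
    proof
      assume "l1 + int (cnt (take s w)) - (l2 + int (cnt (take s mu))) = 0"
      then have "ptf ?A mu s = ptf ?B w s" using ptf_eq_iff[OF lev] by simp
      moreover have "ptf ?A mu s \<in> set p" using p s t lmu by (auto simp: set_path_from)
      moreover have "ptf ?B w s \<in> set q" using q s t lw by (auto simp: set_path_from)
      ultimately have "ptf ?A mu s = ?C" using i1 by auto
      then have "fst (ptf ?A mu s) + snd (ptf ?A mu s) = fst ?C + snd ?C" by simp
      then show False using ptf_level[of ?A mu s] s t by simp
    qed
    have "(\<lambda>t. l1 + int (cnt (take t w)) - (l2 + int (cnt (take t mu)))) 0 > 0" using lt by simp
    then have "(\<lambda>t. l1 + int (cnt (take t w)) - (l2 + int (cnt (take t mu)))) t > 0"
      using sign_iff[of 0 t "\<lambda>t. l1 + int (cnt (take t w)) - (l2 + int (cnt (take t mu)))"] step1 nz by blast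
    then show ?thesis by simp
  qed
  have Bc: "cnt (take t w) < cnt (take t mu)" if t: "1 \<le> t" "t \<le> g" for t
  proof -
    have nz: "int (cnt (take s mu)) - int (cnt (take s w)) \<noteq> 0" if s: "t \<le> s" "s \<le> g" for s
    proof
      assume e: "int (cnt (take s mu)) - int (cnt (take s w)) = 0"
      show False
      proof (cases "s = g")
        case True
        then show False using e lmu lw cmu cw lt by simp
      next
        case False
        have "ptf ?B w s = ptf ?B mu s" using e ptf_eq_iff[of ?B ?B] by simp
        moreover have "ptf ?B mu s \<in> set p'" using p' s lmu by (auto simp: set_path_from)
        moreover have "ptf ?B w s \<in> set q" using q s lw by (auto simp: set_path_from)
        ultimately have "ptf ?B w s = ?B" using i2 by auto
        then have "fst (ptf ?B w s) + snd (ptf ?B w s) = fst ?B + snd ?B" by simp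
        then show False using ptf_level[of ?B w s] s t by simp
      qed
    qed
    have "(\<lambda>t. int (cnt (take t mu)) - int (cnt (take t w))) g > 0" using lmu lw cmu cw lt by simp
    then have "(\<lambda>t. int (cnt (take t mu)) - int (cnt (take t w))) t > 0"
      using sign_iff[of t g "\<lambda>t. int (cnt (take t mu)) - int (cnt (take t w))"] step2 nz t by blast
    then show ?thesis by simp
  qed
  have "(mu, mv) \<in> MidK g l1 l2 k"
    unfolding MidK_def using lmu lw cmu cw A Bc by (auto simp: mv_def)
  moreover have "z = ?F (mu, mv)" using zz p q p' by (simp add: mv_def)
  ultimately show "z \<in> ?F ` MidK g l1 l2 k" by blast
next
  fix z assume "z \<in> ?F ` MidK g l1 l2 k"
  then obtain mu mv where zz: "z = ?F (mu, mv)" and m: "(mu, mv) \<in> MidK g l1 l2 k" by auto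
  define w where "w = rev mv"
  have lmu: "length mu = g" and lw: "length w = g" and cmu: "l2 + int (cnt mu) = k" and cw: "l1 + int (cnt w) = k"
    and A: "\<And>t. t \<in> {1..<g} \<Longrightarrow> l2 + int (cnt (take t mu)) < l1 + int (cnt (take t w))"
    and Bc: "\<And>t. t \<in> {1..<g} \<Longrightarrow> cnt (take t w) < cnt (take t mu)"
    using m by (auto simp: MidK_def w_def)
  have lev: "fst ?A + snd ?A = fst ?B + snd ?B" by simp
  have pb: "path_between (path_from ?A mu) ?A ?C"
    unfolding path_between_def using lattice_path_path_from hd_path_from last_path_from ptf_end lmu cmu
    by auto
  have qb: "path_between (path_from ?B w) ?B ?C"
    unfolding path_between_def using lattice_path_path_from hd_path_from last_path_from ptf_end lw cw
    by auto
  have i1: "set (path_from ?A mu) \<inter> set (path_from ?B w) = {?C}"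
  proof
    show "{?C} \<subseteq> set (path_from ?A mu) \<inter> set (path_from ?B w)"
      using pb qb by (auto simp: path_between_def) (metis last_in_set path_from_ne)+
  next
    show "set (path_from ?A mu) \<inter> set (path_from ?B w) \<subseteq> {?C}"
    proof
      fix x assume xx: "x \<in> set (path_from ?A mu) \<inter> set (path_from ?B w)"
      obtain t where x1: "x = ptf ?A mu t" "t \<le> g" using xx lmu unfolding set_path_from by auto
      obtain s where x2: "x = ptf ?B w s" "s \<le> g" using xx lw unfolding set_path_from by auto
      have "t = s" using ptf_level[of ?A mu t] ptf_level[of ?B w s] x1 x2 by simp
      show "x \<in> {?C}"
      proof (cases "t = g")
        case True
        then show ?thesis using x1 ptf_end[of ?A mu] lmu cmu by simp
      next
        case False
        show ?thesis
        proof (cases "t = 0")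
          case True
          then show ?thesis using x1 x2 \<open>t = s\<close> lt by (simp add: ptf_0)
        next
          case False
          then have "t \<in> {1..<g}" using \<open>t \<noteq> g\<close> x1 by auto
          then show ?thesis using A[of t] x1 x2 \<open>t = s\<close> ptf_eq_iff[OF lev, of mu t w] by simp
        qed
      qed
    qed
  qed
  have i2: "set (path_from ?B w) \<inter> set (path_from ?B mu) = {?B}"
  proof
    show "{?B} \<subseteq> set (path_from ?B w) \<inter> set (path_from ?B mu)"
      using hd_in_set[OF path_from_ne[of "(l1, N1 - l1)" w]] hd_in_set[OF path_from_ne[of "(l1, N1 - l1)" mu]] by (simp add: hd_path_from)
  next
    show "set (path_from ?B w) \<inter> set (path_from ?B mu) \<subseteq> {?B}"
    proof
      fix x assume xx: "x \<in> set (path_from ?B w) \<inter> set (path_from ?B mu)"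
      obtain t where x1: "x = ptf ?B w t" "t \<le> g" using xx lw unfolding set_path_from by auto
      obtain s where x2: "x = ptf ?B mu s" "s \<le> g" using xx lmu unfolding set_path_from by auto
      have "t = s" using ptf_level[of ?B w t] ptf_level[of ?B mu s] x1 x2 by simp
      show "x \<in> {?B}"
      proof (cases "t = g")
        case True
        then show ?thesis using x1 x2 \<open>t = s\<close> ptf_end[of ?B mu] ptf_end[of ?B w] lmu lw cmu cw lt by simp
      next
        case False
        show ?thesis
        proof (cases "t = 0")
          case True
          then show ?thesis using x1 by (simp add: ptf_0)
        next
          case False
          then have "t \<in> {1..<g}" using \<open>t \<noteq> g\<close> x1 by auto
          then show ?thesis using Bc[of t] x1 x2 \<open>t = s\<close> ptf_eq_iff[of ?B ?B w t mu] by simp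
        qed
      qed
    qed
  qed
  show "z \<in> Nset ?A ?B ?C"
    unfolding Nset_def zz using pb qb i1 i2 by (simp add: w_def path_word_path_from)
qed

lemma card_Nset:
  fixes l1 l2 k N1 :: int and g :: nat
  assumes lt: "l2 < l1"
  shows "Ncount (l2, N1 - l2) (l1, N1 - l1) (k, N1 + int g - k) = card (MidK g l1 l2 k)"
  unfolding Ncount_def Nset_eq[OF lt]
proof (rule card_image)
  show "inj_on (\<lambda>(mu,mv). (path_from (l2, N1 - l2) mu, path_from (l1, N1 - l1) (rev mv), path_from (l1, N1 - l1) mu)) (MidK g l1 l2 k)"
  proof (rule inj_onI, clarsimp)
    fix mu mv mu' mv'
    assume "path_from (l2, N1 - l2) mu = path_from (l2, N1 - l2) mu'" "path_from (l1, N1 - l1) (rev mv) = path_from (l1, N1 - l1) (rev mv')"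
    then have "path_word (path_from (l2, N1 - l2) mu) = path_word (path_from (l2, N1 - l2) mu')"
      "path_word (path_from (l1, N1 - l1) (rev mv)) = path_word (path_from (l1, N1 - l1) (rev mv'))" by simp_all
    then show "mu = mu' \<and> mv = mv'" by (simp add: path_word_path_from)
  qed
qed




lemma len_cnt: "length w = cnt w + count_list w Lb"
  by (induction w) (auto, case_tac a, auto)

lemma abel_eq_len: "abel_eq x y \<Longrightarrow> length x = length y"
  unfolding abel_eq_def using len_cnt[of x] len_cnt[of y] by metis

lemma abel_eq_iff: "length x = length y \<Longrightarrow> abel_eq x y \<longleftrightarrow> cnt x = cnt y"
proof
  assume "abel_eq x y" then show "cnt x = cnt y" by (simp add: abel_eq_def)
next
  assume l: "length x = length y" and c: "cnt x = cnt y"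
  then have "count_list x Lb = count_list y Lb" using len_cnt[of x] len_cnt[of y] by simp
  then show "abel_eq x y" using c unfolding abel_eq_def by (metis letter.exhaust)
qed

definition condD :: "word \<Rightarrow> word \<Rightarrow> nat \<Rightarrow> bool" where
 "condD u v i \<longleftrightarrow> 1 \<le> i \<and> i < length u \<and> i < length v \<and> cnt (drop (length u - i) u) = cnt (take i v) \<and>
    (\<forall>l. 1 \<le> l \<longrightarrow> l < i \<longrightarrow> cnt (drop (length u - l) u) \<noteq> cnt (take l v))"

lemma ib_iff: "(\<exists>x y. int_border u v x y \<and> length x = l) \<longleftrightarrow>
   1 \<le> l \<and> l < length u \<and> l < length v \<and> cnt (drop (length u - l) u) = cnt (take l v)"
proof
  assume "\<exists>x y. int_border u v x y \<and> length x = l"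
  then obtain x y where b: "int_border u v x y" and lx: "length x = l" by blast
  from b obtain z z' where u: "u = z @ x" and v: "v = y @ z'" and ne: "x \<noteq> []" and lu: "length x < length u"
     and lv: "length y < length v" and ab: "abel_eq x y"
    unfolding int_border_def is_suffix_of_def is_prefix_of_def by blast
  have ly: "length y = l" using abel_eq_len[OF ab] lx by simp
  have "x = drop (length u - l) u" using u lx by simp
  moreover have "y = take l v" using v ly by simp
  moreover have "cnt x = cnt y" using ab by (simp add: abel_eq_def)
  ultimately show "1 \<le> l \<and> l < length u \<and> l < length v \<and> cnt (drop (length u - l) u) = cnt (take l v)"
    using ne lx lu lv ly by (auto simp: Suc_le_eq)
next
  assume h: "1 \<le> l \<and> l < length u \<and> l < length v \<and> cnt (drop (length u - l) u) = cnt (take l v)"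
  let ?x = "drop (length u - l) u" and ?y = "take l v"
  have "int_border u v ?x ?y"
    unfolding int_border_def is_suffix_of_def is_prefix_of_def
  proof (intro conjI)
    show "?x \<noteq> []" using h by auto
    show "\<exists>z. u = z @ ?x" by (metis append_take_drop_id)
    show "length ?x < length u" using h by auto
    show "\<exists>z. v = ?y @ z" by (metis append_take_drop_id)
    show "length ?y < length v" using h by auto
    show "abel_eq ?x ?y" using h by (subst abel_eq_iff) auto
  qed
  moreover have "length ?x = l" using h by auto
  ultimately show "\<exists>x y. int_border u v x y \<and> length x = l" by blast
qed


lemma lsb_iff: "((\<exists>x y. int_border u v x y) \<and> lsb u v = i) \<longleftrightarrow> condD u v i"
proof -
  let ?P = "\<lambda>l. \<exists>x y. int_border u v x y \<and> length x = l"
  have P: "?P l \<longleftrightarrow> 1 \<le> l \<and> l < length u \<and> l < length v \<and> cnt (drop (length u - l) u) = cnt (take l v)" for l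
    by (rule ib_iff)
  show ?thesis
  proof
    assume h: "(\<exists>x y. int_border u v x y) \<and> lsb u v = i"
    then have ex: "\<exists>l. ?P l" by blast
    have Pi: "?P i" using LeastI_ex[OF ex] h by (simp add: lsb_def)
    have nl: "\<not> ?P l" if "l < i" for l using not_less_Least[of l ?P] that h by (simp add: lsb_def)
    have Pi': "1 \<le> i \<and> i < length u \<and> i < length v \<and> cnt (drop (length u - i) u) = cnt (take i v)"
      using Pi P[of i] by simp
    have nl': "cnt (drop (length u - l) u) \<noteq> cnt (take l v)" if "1 \<le> l" "l < i" for l
    proof
      assume "cnt (drop (length u - l) u) = cnt (take l v)"
      then have "?P l" using P[of l] that Pi' by simp
      then show False using nl[of l] that by simp
    qed
    show "condD u v i" unfolding condD_def using Pi' nl' by blast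
  next
    assume c: "condD u v i"
    then have Pi: "?P i" using P[of i] unfolding condD_def by simp
    have "lsb u v = i" unfolding lsb_def
    proof (rule Least_equality)
      show "?P i" by fact
      show "i \<le> l" if "?P l" for l
      proof (rule ccontr)
        assume "\<not> i \<le> l"
        then have "l < i" by simp
        moreover have "1 \<le> l \<and> l < length u \<and> l < length v \<and> cnt (drop (length u - l) u) = cnt (take l v)"
          using that P[of l] by simp
        ultimately show False using c unfolding condD_def by blast
      qed
    qed
    then show "(\<exists>x y. int_border u v x y) \<and> lsb u v = i" using Pi by blast
  qed
qed


lemma ext_int: "ext_border u v x y \<longleftrightarrow> int_border v u y x"
proof -
  have "abel_eq x y \<longleftrightarrow> abel_eq y x" unfolding abel_eq_def by auto
  moreover have "abel_eq x y \<Longrightarrow> (x = [] \<longleftrightarrow> y = [])" using abel_eq_len[of x y] by auto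
  ultimately show ?thesis unfolding ext_border_def int_border_def by blast
qed

lemma condD_unique: "condD u v i \<Longrightarrow> condD u v i' \<Longrightarrow> i = i'"
proof (rule ccontr)
  assume c: "condD u v i" "condD u v i'" and ne: "i \<noteq> i'"
  show False
  proof (cases "i < i'")
    case True
    then show False using c unfolding condD_def by auto
  next
    case False
    then have "i' < i" using ne by simp
    then show False using c unfolding condD_def by auto
  qed
qed

definition Tset :: "nat \<Rightarrow> nat \<Rightarrow> nat \<Rightarrow> (word \<times> word) set" where
 "Tset n i j = {(u,v). length u = n \<and> length v = n \<and> condD u v i \<and> condD v u j}"

lemma Mo_set: "{(u, v). length u = n \<and> length v = n \<and> MAB u v \<and>
       int (lsb u v) + int (lsb v u) - int n = int g} = (\<Union>i\<in>{g+1..n-1}. Tset n i (n + g - i))"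
proof (rule set_eqI, rule iffI)
  fix z assume "z \<in> {(u, v). length u = n \<and> length v = n \<and> MAB u v \<and>
       int (lsb u v) + int (lsb v u) - int n = int g}"
  then obtain u v where z: "z = (u,v)" and l: "length u = n" "length v = n" and m: "MAB u v"
     and e: "int (lsb u v) + int (lsb v u) - int n = int g" by blast
  have c1: "condD u v (lsb u v)" using m lsb_iff unfolding MAB_def by blast
  have c2: "condD v u (lsb v u)" using m lsb_iff ext_int unfolding MAB_def by metis
  have "lsb u v < n" "lsb v u < n" using c1 c2 l by (auto simp: condD_def)
  then have "lsb u v \<in> {g+1..n-1}" "lsb v u = n + g - lsb u v" using e by auto
  then show "z \<in> (\<Union>i\<in>{g+1..n-1}. Tset n i (n + g - i))" using z l c1 c2 unfolding Tset_def by force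
next
  fix z assume "z \<in> (\<Union>i\<in>{g+1..n-1}. Tset n i (n + g - i))"
  then obtain i u v where i: "i \<in> {g+1..n-1}" and z: "z = (u,v)" and l: "length u = n" "length v = n"
    and c1: "condD u v i" and c2: "condD v u (n + g - i)" unfolding Tset_def by blast
  have "(\<exists>x y. int_border u v x y) \<and> lsb u v = i" using c1 lsb_iff by blast
  moreover have "(\<exists>x y. int_border v u x y) \<and> lsb v u = n + g - i" using c2 lsb_iff by blast
  ultimately have "MAB u v" "lsb u v = i" "lsb v u = n + g - i" unfolding MAB_def using ext_int by metis+
  then show "z \<in> {(u, v). length u = n \<and> length v = n \<and> MAB u v \<and>
       int (lsb u v) + int (lsb v u) - int n = int g}" using z l i by auto
qed

lemma finite_Tset: "finite (Tset n i j)"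
  by (rule finite_subset[of _ "{x. length x = n} \<times> {y. length y = n}"]) (auto simp: Tset_def finite_words)

lemma card_Mo: "Mo g n = (\<Sum>i\<in>{g+1..n-1}. card (Tset n i (n + g - i)))"
  unfolding Mo_def Mo_set
proof (rule card_UN_disjoint)
  show "finite {g+1..n-1}" by simp
  show "\<forall>i\<in>{g+1..n-1}. finite (Tset n i (n + g - i))" using finite_Tset by blast
  show "\<forall>i\<in>{g+1..n-1}. \<forall>j\<in>{g+1..n-1}. i \<noteq> j \<longrightarrow> Tset n i (n + g - i) \<inter> Tset n j (n + g - j) = {}"
  proof (intro ballI impI)
    fix i j :: nat assume "i \<noteq> j"
    then show "Tset n i (n + g - i) \<inter> Tset n j (n + g - j) = {}"
      unfolding Tset_def using condD_unique[of _ _ i j] by auto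
  qed
qed




definition sw :: "word \<Rightarrow> word" where "sw = map (\<lambda>c. if c = La then Lb else La)"

lemma cnt_sw: "cnt (sw w) = length w - cnt w"
  unfolding sw_def by (induction w) (auto, case_tac a, auto simp: Suc_diff_le count_le_length)

lemma sw_sw: "sw (sw w) = w"
  unfolding sw_def by (induction w) (auto, case_tac a, auto)

lemma length_sw[simp]: "length (sw w) = length w" by (simp add: sw_def)
lemma take_sw: "take l (sw w) = sw (take l w)" by (simp add: sw_def take_map)
lemma drop_sw: "drop l (sw w) = sw (drop l w)" by (simp add: sw_def drop_map)

lemma condD_sw: "condD (sw u) (sw v) i \<longleftrightarrow> condD u v i"
proof -
  have key: "cnt (drop (length u - l) (sw u)) = cnt (take l (sw v)) \<longleftrightarrow> cnt (drop (length u - l) u) = cnt (take l v)"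
    if "l < length u" "l < length v" for l
  proof -
    have "length (drop (length u - l) u) = l" "length (take l v) = l" using that by auto
    moreover have "cnt (drop (length u - l) u) \<le> l" "cnt (take l v) \<le> l"
      using count_le_length calculation by metis+
    ultimately show ?thesis by (simp add: drop_sw take_sw cnt_sw) linarith
  qed
  show ?thesis
  proof (cases "1 \<le> i \<and> i < length u \<and> i < length v")
    case True
    have k: "cnt (drop (length u - l) (sw u)) = cnt (take l (sw v)) \<longleftrightarrow> cnt (drop (length u - l) u) = cnt (take l v)"
      if "l \<le> i" for l using key[of l] that True by simp
    have a1: "(\<forall>l. 1 \<le> l \<longrightarrow> l < i \<longrightarrow> cnt (drop (length u - l) (sw u)) \<noteq> cnt (take l (sw v))) \<longleftrightarrow>
          (\<forall>l. 1 \<le> l \<longrightarrow> l < i \<longrightarrow> cnt (drop (length u - l) u) \<noteq> cnt (take l v))"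
      using k by (meson less_imp_le)
    show ?thesis unfolding condD_def length_sw using a1 k[of i] True by simp
  next
    case False
    then show ?thesis unfolding condD_def by auto
  qed
qed

definition Tp :: "nat \<Rightarrow> nat \<Rightarrow> nat \<Rightarrow> (word \<times> word) set" where
 "Tp n i j = Tset n i j \<inter> {(u,v). cnt (take 1 u) < cnt (drop (n-1) v)}"

definition Tm :: "nat \<Rightarrow> nat \<Rightarrow> nat \<Rightarrow> (word \<times> word) set" where
 "Tm n i j = Tset n i j \<inter> {(u,v). cnt (drop (n-1) v) < cnt (take 1 u)}"

lemma Tset_split: "j \<ge> 2 \<Longrightarrow> Tset n i j = Tp n i j \<union> Tm n i j"
proof -
  assume j: "j \<ge> 2"
  have "cnt (drop (n-1) v) \<noteq> cnt (take 1 u)" if "(u,v) \<in> Tset n i j" for u v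
    using that j unfolding Tset_def condD_def by auto
  then show ?thesis unfolding Tp_def Tm_def by (auto simp: linorder_neq_iff)
qed

lemma sw_1:
  assumes "length u = n" "length v = n" "n \<ge> 1"
  shows "cnt (take 1 (sw u)) = 1 - cnt (take 1 u)" "cnt (drop (n-1) (sw v)) = 1 - cnt (drop (n-1) v)"
    "cnt (take 1 u) \<le> 1" "cnt (drop (n-1) v) \<le> 1"
proof -
  have l: "length (take 1 u) = 1" "length (drop (n-1) v) = 1" using assms by auto
  show "cnt (take 1 (sw u)) = 1 - cnt (take 1 u)" "cnt (drop (n-1) (sw v)) = 1 - cnt (drop (n-1) v)"
    using l by (simp_all add: take_sw drop_sw cnt_sw)
  show "cnt (take 1 u) \<le> 1" "cnt (drop (n-1) v) \<le> 1" using l count_le_length by metis+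
qed

lemma card_Tm: "n \<ge> 1 \<Longrightarrow> card (Tm n i j) = card (Tp n i j)"
proof -
  assume n: "n \<ge> 1"
  let ?f = "\<lambda>(u,v). (sw u, sw v)"
  have "?f ` Tp n i j = Tm n i j"
  proof (rule set_eqI, rule iffI)
    fix z assume "z \<in> ?f ` Tp n i j"
    then obtain u v where z: "z = (sw u, sw v)" and t: "(u,v) \<in> Tp n i j" by auto
    then have l: "length u = n" "length v = n" unfolding Tp_def Tset_def by auto
    show "z \<in> Tm n i j" using t z sw_1[OF l n] unfolding Tp_def Tm_def Tset_def by (auto simp: condD_sw)
  next
    fix z assume t: "z \<in> Tm n i j"
    then obtain u v where z: "z = (u, v)" by force
    then have l: "length u = n" "length v = n" using t unfolding Tm_def Tset_def by auto
    have "(sw u, sw v) \<in> Tp n i j" using t z sw_1[OF l n] unfolding Tp_def Tm_def Tset_def by (auto simp: condD_sw)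
    moreover have "z = ?f (sw u, sw v)" using z by (simp add: sw_sw)
    ultimately show "z \<in> ?f ` Tp n i j" by blast
  qed
  moreover have "inj_on ?f (Tp n i j)"
    by (rule inj_onI) (auto, metis sw_sw, metis sw_sw)
  ultimately show ?thesis by (metis card_image)
qed

lemma card_Tset: "n \<ge> 1 \<Longrightarrow> j \<ge> 2 \<Longrightarrow> card (Tset n i j) = 2 * card (Tp n i j)"
proof -
  assume n: "n \<ge> 1" and j: "j \<ge> 2"
  have f: "finite (Tp n i j)" "finite (Tm n i j)" using finite_Tset unfolding Tp_def Tm_def by auto
  have d: "Tp n i j \<inter> Tm n i j = {}" unfolding Tp_def Tm_def by auto
  show ?thesis using Tset_split[OF j] card_Un_disjoint[OF f d] card_Tm[OF n] by simp
qed




lemma rev_drop_cnt: "l \<le> length X \<Longrightarrow> cnt (drop (length X - l) (rev X)) = cnt (take l X)"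
  by (simp add: drop_rev)

lemma cnt_take_drop: "cnt (take m w) + cnt (drop m w) = cnt w"
  by (metis append_take_drop_id count_list_append)

lemma take_rev_cnt: "t \<le> length w \<Longrightarrow> int (cnt (take t (rev w))) + int (cnt (take (length w - t) w)) = int (cnt w)"
  using cnt_take_drop[of "length w - t" w] by (simp add: take_rev)

definition build :: "(word \<times> word) \<times> (word \<times> word) \<times> (word \<times> word) \<Rightarrow> word \<times> word" where
 "build z = (case z of ((x1,y1),(mu,mv),(x2,y2)) \<Rightarrow> (y1 @ mu @ rev y2, x2 @ mv @ rev x1))"

locale dec =
  fixes x1 y1 mu mv x2 y2 :: word and N1 g N2 :: nat
  assumes lx1: "length x1 = N1" and ly1: "length y1 = N1" and lmu: "length mu = g" and lmv: "length mv = g"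
    and lx2: "length x2 = N2" and ly2: "length y2 = N2"
begin

definition "u = y1 @ mu @ rev y2"
definition "v = x2 @ mv @ rev x1"
definition "n = N1 + g + N2"

lemma lu: "length u = n" and lv: "length v = n"
  by (simp_all add: u_def v_def n_def lx1 ly1 lmu lmv lx2 ly2)

lemma E1: "l \<le> N1 \<Longrightarrow> cnt (drop (n - l) v) = cnt (take l x1) \<and> cnt (take l u) = cnt (take l y1)"
proof -
  assume l: "l \<le> N1"
  have "drop (n - l) v = drop (length x1 - l) (rev x1)"
    using l by (simp add: v_def n_def lx1 lmv lx2)
  then have "cnt (drop (n - l) v) = cnt (take l x1)" using rev_drop_cnt[of l x1] l lx1 by simp
  moreover have "take l u = take l y1" using l by (simp add: u_def ly1)
  ultimately show ?thesis by simp
qed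

lemma E2: "t \<le> g \<Longrightarrow> cnt (drop (n - (N1 + t)) v) = cnt (take t (rev mv)) + cnt x1 \<and>
    cnt (take (N1 + t) u) = cnt y1 + cnt (take t mu)"
proof -
  assume t: "t \<le> g"
  have "drop (n - (N1 + t)) v = drop (length (rev mv) - t) (rev (rev mv)) @ rev x1"
    using t by (simp add: v_def n_def lx1 lmv lx2)
  then have "cnt (drop (n - (N1 + t)) v) = cnt (take t (rev mv)) + cnt x1" using rev_drop_cnt[of t "rev mv"] t lmv by simp
  moreover have "take (N1 + t) u = y1 @ take t mu" using t by (simp add: u_def ly1 lmu)
  ultimately show ?thesis by simp
qed

lemma D1: "l \<le> N2 \<Longrightarrow> cnt (drop (n - l) u) = cnt (take l y2) \<and> cnt (take l v) = cnt (take l x2)"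
proof -
  assume l: "l \<le> N2"
  have "drop (n - l) u = drop (length y2 - l) (rev y2)"
    using l by (simp add: u_def n_def ly1 lmu ly2)
  then have "cnt (drop (n - l) u) = cnt (take l y2)" using rev_drop_cnt[of l y2] l ly2 by simp
  moreover have "take l v = take l x2" using l by (simp add: v_def lx2)
  ultimately show ?thesis by simp
qed

lemma D2: "t \<le> g \<Longrightarrow> cnt (drop (n - (N2 + t)) u) = cnt (take t (rev mu)) + cnt y2 \<and>
    cnt (take (N2 + t) v) = cnt x2 + cnt (take t mv)"
proof -
  assume t: "t \<le> g"
  have "drop (n - (N2 + t)) u = drop (length (rev mu) - t) (rev (rev mu)) @ rev y2"
    using t by (simp add: u_def n_def ly1 lmu ly2)
  then have "cnt (drop (n - (N2 + t)) u) = cnt (take t (rev mu)) + cnt y2" using rev_drop_cnt[of t "rev mu"] t lmu by simp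
  moreover have "take (N2 + t) v = x2 @ take t mv" using t by (simp add: v_def lx2 lmv)
  ultimately show ?thesis by simp
qed

lemma M1: "t \<le> g \<Longrightarrow> int (cnt (take t (rev mu))) = int (cnt mu) - int (cnt (take (g - t) mu))"
  using take_rev_cnt[of t mu] lmu by simp

lemma M2: "t \<le> g \<Longrightarrow> int (cnt (take t mv)) = int (cnt mv) - int (cnt (take (g - t) (rev mv)))"
  using take_rev_cnt[of t "rev mv"] lmv by simp


lemma build_in:
  assumes N1: "N1 \<ge> 1" and N2: "N2 \<ge> 1"
    and G1: "(x1,y1) \<in> Good N1 l1 l2" and MK: "(mu,mv) \<in> MidK g l1 l2 k"
    and G2: "(x2,y2) \<in> Good N2 c (c - (l1 - l2))"
  shows "(u, v) \<in> Tp n (N2 + g) (N1 + g)"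
proof -
  have cx1: "int (cnt x1) = l1" and cy1: "int (cnt y1) = l2"
    and g1: "\<And>l. l \<in> {1..N1} \<Longrightarrow> cnt (take l y1) < cnt (take l x1)" using G1 by (auto simp: Good_def)
  have cmu: "l2 + int (cnt mu) = k" and cmv: "l1 + int (cnt mv) = k"
    and ma: "\<And>t. t \<in> {1..<g} \<Longrightarrow> l2 + int (cnt (take t mu)) < l1 + int (cnt (take t (rev mv)))"
    and mb: "\<And>t. t \<in> {1..<g} \<Longrightarrow> cnt (take t (rev mv)) < cnt (take t mu)"
    using MK by (auto simp: MidK_def)
  have cx2: "int (cnt x2) = c" and cy2: "int (cnt y2) = c - (l1 - l2)"
    and g2: "\<And>l. l \<in> {1..N2} \<Longrightarrow> cnt (take l y2) < cnt (take l x2)" using G2 by (auto simp: Good_def)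
  have trm: "take g (rev mu) = rev mu" "take g (rev mv) = rev mv" "take g mu = mu" "take g mv = mv"
    using lmu lmv by auto
  have cD: "condD u v (N2 + g)"
    unfolding condD_def lu lv
  proof (intro conjI allI impI)
    show "1 \<le> N2 + g" "N2 + g < n" "N2 + g < n" using N1 N2 by (auto simp: n_def)
    show "cnt (drop (n - (N2 + g)) u) = cnt (take (N2 + g) v)"
      using D2[of g] trm cmu cmv cx2 cy2 by simp
  next
    fix l assume l: "1 \<le> l" "l < N2 + g"
    show "cnt (drop (n - l) u) \<noteq> cnt (take l v)"
    proof (cases "l \<le> N2")
      case True
      then show ?thesis using D1[of l] g2[of l] l by auto
    next
      case False
      define t where "t = l - N2"
      have t: "1 \<le> t" "t < g" "l = N2 + t" using False l by (auto simp: t_def)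
      have "cnt (take (g - t) (rev mv)) < cnt (take (g - t) mu)" using mb[of "g - t"] t by auto
      moreover have "int (cnt (drop (n - l) u)) = int (cnt mu) - int (cnt (take (g - t) mu)) + int (cnt y2)"
        using D2[of t] M1[of t] t by simp
      moreover have "int (cnt (take l v)) = int (cnt x2) + int (cnt mv) - int (cnt (take (g - t) (rev mv)))"
        using D2[of t] M2[of t] t by simp
      ultimately show ?thesis using cmu cmv cx2 cy2 by linarith
    qed
  qed
  have cE: "condD v u (N1 + g)"
    unfolding condD_def lu lv
  proof (intro conjI allI impI)
    show "1 \<le> N1 + g" "N1 + g < n" "N1 + g < n" using N1 N2 by (auto simp: n_def)
    show "cnt (drop (n - (N1 + g)) v) = cnt (take (N1 + g) u)"
      using E2[of g] trm cmu cmv cx1 cy1 by simp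
  next
    fix l assume l: "1 \<le> l" "l < N1 + g"
    show "cnt (drop (n - l) v) \<noteq> cnt (take l u)"
    proof (cases "l \<le> N1")
      case True
      then show ?thesis using E1[of l] g1[of l] l by auto
    next
      case False
      define t where "t = l - N1"
      have t: "1 \<le> t" "t < g" "l = N1 + t" using False l by (auto simp: t_def)
      then show ?thesis using E2[of t] ma[of t] cx1 cy1 by auto
    qed
  qed
  have s: "cnt (take 1 u) < cnt (drop (n-1) v)" using E1[of 1] g1[of 1] N1 by auto
  show ?thesis unfolding Tp_def Tset_def using lu lv cD cE s by auto
qed

end


lemma cnt_drop_step: "l < length v \<Longrightarrow> cnt (drop (length v - Suc l) v) \<le> cnt (drop (length v - l) v) + 1 \<and>
   cnt (drop (length v - l) v) \<le> cnt (drop (length v - Suc l) v)"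
proof -
  assume l: "l < length v"
  have a: "cnt (drop (length v - l) v) = cnt (take l (rev v))" using rev_drop_cnt[of l "rev v"] l by simp
  have b: "cnt (drop (length v - Suc l) v) = cnt (take (Suc l) (rev v))" using rev_drop_cnt[of "Suc l" "rev v"] l by simp
  show ?thesis unfolding a b using cnt_take_Suc by blast
qed

lemma ed_step:
  assumes "l < n" "length u = n" "length v = n"
  shows "int (cnt (drop (n - Suc l) v)) - int (cnt (take (Suc l) u)) \<le> int (cnt (drop (n - l) v)) - int (cnt (take l u)) + 1 \<and>
         int (cnt (drop (n - l) v)) - int (cnt (take l u)) \<le> int (cnt (drop (n - Suc l) v)) - int (cnt (take (Suc l) u)) + 1"
proof -
  have "cnt (drop (n - Suc l) v) \<le> cnt (drop (n - l) v) + 1" "cnt (drop (n - l) v) \<le> cnt (drop (n - Suc l) v)"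
    using cnt_drop_step[of l v] assms by auto
  moreover have "cnt (take (Suc l) u) \<le> cnt (take l u) + 1" "cnt (take l u) \<le> cnt (take (Suc l) u)"
    using cnt_take_Suc by auto
  ultimately show ?thesis by linarith
qed

definition Idx :: "nat \<Rightarrow> nat \<Rightarrow> nat \<Rightarrow> (int \<times> int \<times> int \<times> int) set" where
 "Idx N1 g N2 = Sigma {0..int N1 - 2} (\<lambda>l2. Sigma {l2+2..int N1} (\<lambda>l1. Sigma {l1..int g + l2} (\<lambda>k. {l1-l2..int N2})))"

definition Pset :: "nat \<Rightarrow> nat \<Rightarrow> nat \<Rightarrow> int \<Rightarrow> int \<Rightarrow> int \<Rightarrow> int \<Rightarrow> ((word \<times> word) \<times> (word \<times> word) \<times> (word \<times> word)) set" where
 "Pset N1 g N2 l2 l1 k c = Good N1 l1 l2 \<times> MidK g l1 l2 k \<times> Good N2 c (c - (l1 - l2))"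

lemma decomp:
  assumes N1: "N1 \<ge> 1" and N2: "N2 \<ge> 1" and g: "g \<ge> 2" and n: "n = N1 + g + N2"
    and T: "(u, v) \<in> Tp n (N2 + g) (N1 + g)"
  shows "\<exists>z\<in>(\<Union>(l2,l1,k,c)\<in>Idx N1 g N2. Pset N1 g N2 l2 l1 k c). build z = (u, v)"
proof -
  have lu: "length u = n" and lv: "length v = n" and cD: "condD u v (N2 + g)" and cE: "condD v u (N1 + g)"
    and s: "cnt (take 1 u) < cnt (drop (n-1) v)" using T unfolding Tp_def Tset_def by auto
  define y1 where "y1 = take N1 u"
  define mu where "mu = take g (drop N1 u)"
  define y2 where "y2 = rev (drop (N1 + g) u)"
  define x2 where "x2 = take N2 v"
  define mv where "mv = take g (drop N2 v)"
  define x1 where "x1 = rev (drop (N2 + g) v)"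
  interpret d: dec x1 y1 mu mv x2 y2 N1 g N2
    by unfold_locales (auto simp: x1_def y1_def mu_def mv_def x2_def y2_def lu lv n)
  have uu: "d.u = u"
  proof -
    have c: "drop (N1 + g) u = drop g (drop N1 u)" by (simp add: add.commute)
    have a: "take g (drop N1 u) @ drop g (drop N1 u) = drop N1 u" by (rule append_take_drop_id)
    have b: "take N1 u @ drop N1 u = u" by (rule append_take_drop_id)
    have "d.u = y1 @ mu @ rev y2" by (rule d.u_def)
    also have "\<dots> = u" unfolding y1_def mu_def y2_def rev_rev_ident c a b ..
    finally show ?thesis .
  qed
  have vv: "d.v = v"
  proof -
    have c: "drop (N2 + g) v = drop g (drop N2 v)" by (simp add: add.commute)
    have a: "take g (drop N2 v) @ drop g (drop N2 v) = drop N2 v" by (rule append_take_drop_id)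
    have b: "take N2 v @ drop N2 v = v" by (rule append_take_drop_id)
    have "d.v = x2 @ mv @ rev x1" by (rule d.v_def)
    also have "\<dots> = v" unfolding x2_def mv_def x1_def rev_rev_ident c a b ..
    finally show ?thesis .
  qed
  have nn: "d.n = n" by (simp add: d.n_def n)
  note E1 = d.E1[unfolded uu vv nn] and E2 = d.E2[unfolded uu vv nn]
    and D1 = d.D1[unfolded uu vv nn] and D2 = d.D2[unfolded uu vv nn]
  define e where "e l = int (cnt (drop (n - l) v)) - int (cnt (take l u))" for l
  define f where "f l = int (cnt (take l v)) - int (cnt (drop (n - l) u))" for l
  have estep0: "e (Suc t) \<le> e t + 1 \<and> e t \<le> e (Suc t) + 1" if "t < n" for t
    using ed_step[of t n u v] lu lv that unfolding e_def by simp
  have fstep0: "f (Suc t) \<le> f t + 1 \<and> f t \<le> f (Suc t) + 1" if "t < n" for t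
  proof -
    have h: "int (cnt (drop (n - Suc t) u)) - int (cnt (take (Suc t) v)) \<le> int (cnt (drop (n - t) u)) - int (cnt (take t v)) + 1 \<and>
         int (cnt (drop (n - t) u)) - int (cnt (take t v)) \<le> int (cnt (drop (n - Suc t) u)) - int (cnt (take (Suc t) v)) + 1"
      using ed_step[of t n v u] lu lv that by simp
    then show ?thesis unfolding f_def by linarith
  qed
  have estep: "\<And>t. 1 \<le> t \<Longrightarrow> t < l \<Longrightarrow> e (Suc t) \<le> e t + 1 \<and> e t \<le> e (Suc t) + 1" if "l < n" for l
    by (meson estep0 less_trans that)
  have fstep: "\<And>t. a \<le> t \<Longrightarrow> t < l \<Longrightarrow> f (Suc t) \<le> f t + 1 \<and> f t \<le> f (Suc t) + 1" if "l < n" for l a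
    by (meson fstep0 less_trans that)
  have e1: "e 1 > 0" using s by (simp add: e_def)
  have epos: "e l > 0" if l: "1 \<le> l" "l < N1 + g" for l
  proof -
    have nz: "\<And>t. 1 \<le> t \<Longrightarrow> t \<le> l \<Longrightarrow> e t \<noteq> 0" using cE l unfolding condD_def e_def lv by auto
    have "l < n" using l n N2 by simp
    then show ?thesis using sign_iff[of 1 l e] estep[of l] nz e1 l by blast
  qed
  have eqj: "cnt (drop (n - (N1 + g)) v) = cnt (take (N1 + g) u)" using cE unfolding condD_def lv by simp
  have eqi: "cnt (drop (n - (N2 + g)) u) = cnt (take (N2 + g) v)" using cD unfolding condD_def lu by simp
  have trm: "take g (rev mu) = rev mu" "take g (rev mv) = rev mv" "take g mu = mu" "take g mv = mv"
    using d.lmu d.lmv by auto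
  have eqj': "int (cnt mv) + int (cnt x1) = int (cnt y1) + int (cnt mu)" using eqj E2[of g] trm by simp
  have eqi': "int (cnt mu) + int (cnt y2) = int (cnt x2) + int (cnt mv)" using eqi D2[of g] trm by simp
  have eN1: "int (cnt x1) - int (cnt y1) > 0" using epos[of N1] N1 g E1[of N1] d.lx1 d.ly1 unfolding e_def by simp
  have fN2: "f N2 > 0" using D1[of N2] d.lx2 d.ly2 eqj' eqi' eN1 unfolding f_def by simp
  have fpos: "f l > 0" if l: "1 \<le> l" "l < N2 + g" for l
  proof -
    have nz: "\<And>t. 1 \<le> t \<Longrightarrow> t < N2 + g \<Longrightarrow> f t \<noteq> 0" using cD unfolding condD_def f_def lu by force
    have ln: "l < n" "N2 < n" using l n N1 g by auto
    show ?thesis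
    proof (cases "l \<le> N2")
      case True
      then show ?thesis using sign_iff[of l N2 f] fstep[OF ln(2), of l] nz fN2 l g by auto
    next
      case False
      then show ?thesis using sign_iff[of N2 l f] fstep[OF ln(1), of N2] nz fN2 l N2 by auto
    qed
  qed
  define l1 where "l1 = int (cnt x1)"
  define l2 where "l2 = int (cnt y1)"
  define k where "k = l2 + int (cnt mu)"
  define c where "c = int (cnt x2)"
  have G1: "(x1, y1) \<in> Good N1 l1 l2"
  proof -
    have "cnt (take l y1) < cnt (take l x1)" if l: "l \<in> {1..N1}" for l
    proof -
      have "e l > 0" using epos[of l] l g by auto
      then show ?thesis using E1[of l] l unfolding e_def by auto
    qed
    then show ?thesis unfolding Good_def l1_def l2_def using d.lx1 d.ly1 by blast
  qed
  have ma: "l2 + int (cnt (take t mu)) < l1 + int (cnt (take t (rev mv)))" if t: "t \<in> {1..<g}" for t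
  proof -
    have "e (N1 + t) > 0" using epos[of "N1 + t"] t by auto
    moreover have "t \<le> g" using t by simp
    ultimately show ?thesis using E2[of t] unfolding e_def l1_def l2_def by simp
  qed
  have mb: "cnt (take t (rev mv)) < cnt (take t mu)" if t: "t \<in> {1..<g}" for t
  proof -
    have "f (N2 + (g - t)) > 0" using fpos[of "N2 + (g - t)"] t by auto
    moreover have "int (cnt (drop (n - (N2 + (g - t))) u)) = int (cnt mu) - int (cnt (take t mu)) + int (cnt y2)"
      using D2[of "g - t"] d.M1[of "g - t"] t by auto
    moreover have "int (cnt (take (N2 + (g - t)) v)) = int (cnt x2) + int (cnt mv) - int (cnt (take t (rev mv)))"
      using D2[of "g - t"] d.M2[of "g - t"] t by auto
    ultimately show ?thesis using eqi' unfolding f_def by linarith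
  qed
  have MK: "(mu, mv) \<in> MidK g l1 l2 k"
    unfolding MidK_def using d.lmu d.lmv ma mb eqj' by (auto simp: k_def l1_def l2_def)
  have cy2: "int (cnt y2) = c - (l1 - l2)" using eqj' eqi' unfolding c_def l1_def l2_def by linarith
  have G2: "(x2, y2) \<in> Good N2 c (c - (l1 - l2))"
  proof -
    have "cnt (take l y2) < cnt (take l x2)" if l: "l \<in> {1..N2}" for l
    proof -
      have "f l > 0" using fpos[of l] l g by auto
      then show ?thesis using D1[of l] l unfolding f_def by auto
    qed
    then show ?thesis unfolding Good_def using d.lx2 d.ly2 cy2 c_def by blast
  qed
  have r1: "l1 \<le> int N1" using count_le_length[of x1 La] d.lx1 unfolding l1_def by simp
  have r2: "l2 + 2 \<le> l1"
  proof -
    have "1 \<in> {1..<g}" using g by simp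
    then show ?thesis using ma[of 1] mb[of 1] by linarith
  qed
  have r3: "l1 \<le> k" "k \<le> int g + l2" using eqj' count_le_length[of mu La] d.lmu unfolding k_def l1_def l2_def by auto
  have r4: "l1 - l2 \<le> c" "c \<le> int N2" using cy2 count_le_length[of x2 La] d.lx2 unfolding c_def by auto
  have r0: "0 \<le> l2" unfolding l2_def by simp
  have idx: "(l2, l1, k, c) \<in> Idx N1 g N2" unfolding Idx_def using r0 r1 r2 r3 r4 by auto
  have "((x1,y1),(mu,mv),(x2,y2)) \<in> Pset N1 g N2 l2 l1 k c" unfolding Pset_def using G1 MK G2 by auto
  moreover have "build ((x1,y1),(mu,mv),(x2,y2)) = (u, v)" using uu vv unfolding build_def d.u_def d.v_def by simp
  ultimately show ?thesis using idx by blast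
qed




lemma finite_MidK: "finite (MidK g l1 l2 k)"
  by (rule finite_subset[of _ "{x. length x = g} \<times> {y. length y = g}"]) (auto simp: MidK_def finite_words)

lemma finite_Pset: "finite (Pset N1 g N2 l2 l1 k c)"
  unfolding Pset_def using finite_Good finite_MidK by blast

lemma card_Pset: "card (Pset N1 g N2 l2 l1 k c) = card (Good N1 l1 l2) * card (MidK g l1 l2 k) * card (Good N2 c (c - (l1 - l2)))"
  unfolding Pset_def by (simp add: card_cartesian_product)

lemma finite_Idx: "finite (Idx N1 g N2)"
  unfolding Idx_def by (intro finite_SigmaI) auto

lemma Tp_eq:
  assumes N1: "N1 \<ge> 1" and N2: "N2 \<ge> 1" and g: "g \<ge> 2" and n: "n = N1 + g + N2"
  shows "Tp n (N2 + g) (N1 + g) = build ` (\<Union>(l2,l1,k,c)\<in>Idx N1 g N2. Pset N1 g N2 l2 l1 k c)"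
proof (rule set_eqI, rule iffI)
  fix z assume "z \<in> Tp n (N2 + g) (N1 + g)"
  then obtain u v where z: "z = (u,v)" and T: "(u,v) \<in> Tp n (N2 + g) (N1 + g)" by (cases z) auto
  show "z \<in> build ` (\<Union>(l2,l1,k,c)\<in>Idx N1 g N2. Pset N1 g N2 l2 l1 k c)"
    using decomp[OF N1 N2 g n T] z by (metis (no_types, lifting) image_eqI)
next
  fix z assume "z \<in> build ` (\<Union>(l2,l1,k,c)\<in>Idx N1 g N2. Pset N1 g N2 l2 l1 k c)"
  then obtain l2 l1 k c w where w: "w \<in> Pset N1 g N2 l2 l1 k c" and z: "z = build w" by auto
  then obtain x1 y1 mu mv x2 y2 where ww: "w = ((x1,y1),(mu,mv),(x2,y2))" by (metis prod.collapse)
  have G1: "(x1,y1) \<in> Good N1 l1 l2" and MK: "(mu,mv) \<in> MidK g l1 l2 k" and G2: "(x2,y2) \<in> Good N2 c (c - (l1 - l2))"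
    using w ww unfolding Pset_def by auto
  interpret d: dec x1 y1 mu mv x2 y2 N1 g N2
    using G1 MK G2 by unfold_locales (auto simp: Good_def MidK_def)
  have "(d.u, d.v) \<in> Tp d.n (N2 + g) (N1 + g)" by (rule d.build_in[OF N1 N2 G1 MK G2])
  moreover have "z = (d.u, d.v)" unfolding z ww build_def d.u_def d.v_def by simp
  moreover have "d.n = n" using n d.n_def by simp
  ultimately show "z \<in> Tp n (N2 + g) (N1 + g)" by simp
qed

lemma build_inj:
  "inj_on build (\<Union>(l2,l1,k,c)\<in>Idx N1 g N2. Pset N1 g N2 l2 l1 k c)"
proof (rule inj_onI)
  fix w w' assume w: "w \<in> (\<Union>(l2,l1,k,c)\<in>Idx N1 g N2. Pset N1 g N2 l2 l1 k c)"
    and w': "w' \<in> (\<Union>(l2,l1,k,c)\<in>Idx N1 g N2. Pset N1 g N2 l2 l1 k c)" and e: "build w = build w'"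
  obtain x1 y1 mu mv x2 y2 where ww: "w = ((x1,y1),(mu,mv),(x2,y2))" by (metis prod.collapse)
  obtain x1' y1' mu' mv' x2' y2' where ww': "w' = ((x1',y1'),(mu',mv'),(x2',y2'))" by (metis prod.collapse)
  have l: "length x1 = N1" "length y1 = N1" "length mu = g" "length mv = g" "length x2 = N2" "length y2 = N2"
    using w ww unfolding Pset_def Good_def MidK_def by auto
  have l': "length x1' = N1" "length y1' = N1" "length mu' = g" "length mv' = g" "length x2' = N2" "length y2' = N2"
    using w' ww' unfolding Pset_def Good_def MidK_def by auto
  have eu: "y1 @ mu @ rev y2 = y1' @ mu' @ rev y2'" and ev: "x2 @ mv @ rev x1 = x2' @ mv' @ rev x1'"
    using e ww ww' unfolding build_def by auto
  from eu l l' have "y1 = y1' \<and> mu @ rev y2 = mu' @ rev y2'" by (simp add: append_eq_append_conv)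
  then have u: "y1 = y1'" "mu = mu'" "y2 = y2'" using l l' by (auto simp: append_eq_append_conv)
  from ev l l' have "x2 = x2' \<and> mv @ rev x1 = mv' @ rev x1'" by (simp add: append_eq_append_conv)
  then have v: "x2 = x2'" "mv = mv'" "x1 = x1'" using l l' by (auto simp: append_eq_append_conv)
  show "w = w'" using ww ww' u v by simp
qed

lemma card_Tp:
  assumes N1: "N1 \<ge> 1" and N2: "N2 \<ge> 1" and g: "g \<ge> 2" and n: "n = N1 + g + N2"
  shows "card (Tp n (N2 + g) (N1 + g)) = (\<Sum>z\<in>Idx N1 g N2. case z of (l2,l1,k,c) \<Rightarrow>
       card (Good N1 l1 l2) * card (MidK g l1 l2 k) * card (Good N2 c (c - (l1 - l2))))"
proof -
  have "card (Tp n (N2 + g) (N1 + g)) = card (\<Union>(l2,l1,k,c)\<in>Idx N1 g N2. Pset N1 g N2 l2 l1 k c)"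
    unfolding Tp_eq[OF assms] by (rule card_image[OF build_inj])
  also have "\<dots> = (\<Sum>z\<in>Idx N1 g N2. card (case z of (l2,l1,k,c) \<Rightarrow> Pset N1 g N2 l2 l1 k c))"
  proof (rule card_UN_disjoint)
    show "finite (Idx N1 g N2)" by (rule finite_Idx)
    show "\<forall>z\<in>Idx N1 g N2. finite (case z of (l2,l1,k,c) \<Rightarrow> Pset N1 g N2 l2 l1 k c)"
      using finite_Pset by (auto split: prod.splits)
    show "\<forall>z\<in>Idx N1 g N2. \<forall>z'\<in>Idx N1 g N2. z \<noteq> z' \<longrightarrow>
        (case z of (l2,l1,k,c) \<Rightarrow> Pset N1 g N2 l2 l1 k c) \<inter> (case z' of (l2,l1,k,c) \<Rightarrow> Pset N1 g N2 l2 l1 k c) = {}"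
    proof (intro ballI impI)
      fix z z' :: "int \<times> int \<times> int \<times> int" assume ne: "z \<noteq> z'"
      obtain l2 l1 k c where zz: "z = (l2,l1,k,c)" by (metis prod.collapse)
      obtain l2' l1' k' c' where zz': "z' = (l2',l1',k',c')" by (metis prod.collapse)
      show "(case z of (l2,l1,k,c) \<Rightarrow> Pset N1 g N2 l2 l1 k c) \<inter> (case z' of (l2,l1,k,c) \<Rightarrow> Pset N1 g N2 l2 l1 k c) = {}"
        using ne unfolding zz zz' Pset_def Good_def MidK_def by auto
    qed
  qed
  also have "\<dots> = (\<Sum>z\<in>Idx N1 g N2. case z of (l2,l1,k,c) \<Rightarrow>
       card (Good N1 l1 l2) * card (MidK g l1 l2 k) * card (Good N2 c (c - (l1 - l2))))"
    by (rule sum.cong) (auto simp: card_Pset split: prod.splits)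
  finally show ?thesis .
qed




lemma sum_shift_int: "(\<Sum>m\<in>{a+k..b+k::int}. h (m - k)) = (\<Sum>c\<in>{a..b}. h c)"
proof -
  have e: "{a+k..b+k} = (\<lambda>c. c + k) ` {a..b}" by simp
  have i: "inj_on (\<lambda>c. c + k) {a..b}" by (simp add: inj_on_def)
  show ?thesis unfolding e sum.reindex[OF i] by simp
qed

lemma sum_Sigma4:
  fixes F :: "'a \<times> 'b \<times> 'c \<times> 'd \<Rightarrow> real"
  assumes "finite A" "\<And>a. finite (B a)" "\<And>a b. finite (C a b)" "\<And>a b c. finite (D a b c)"
  shows "(\<Sum>z\<in>Sigma A (\<lambda>a. Sigma (B a) (\<lambda>b. Sigma (C a b) (\<lambda>c. D a b c))). F z) =
    (\<Sum>a\<in>A. \<Sum>b\<in>B a. \<Sum>c\<in>C a b. \<Sum>d\<in>D a b c. F (a,b,c,d))"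
proof -
  have "(\<Sum>a\<in>A. \<Sum>b\<in>B a. \<Sum>c\<in>C a b. \<Sum>d\<in>D a b c. F (a,b,c,d)) =
        (\<Sum>a\<in>A. \<Sum>b\<in>B a. \<Sum>z\<in>Sigma (C a b) (D a b). F (a,b,z))"
    using assms by (simp add: sum.Sigma split_def)
  also have "\<dots> = (\<Sum>a\<in>A. \<Sum>z\<in>Sigma (B a) (\<lambda>b. Sigma (C a b) (D a b)). F (a,z))"
    using assms by (simp add: sum.Sigma split_def finite_SigmaI)
  also have "\<dots> = (\<Sum>z\<in>Sigma A (\<lambda>a. Sigma (B a) (\<lambda>b. Sigma (C a b) (\<lambda>c. D a b c))). F z)"
    using assms by (simp add: sum.Sigma split_def finite_SigmaI)
  finally show ?thesis by simp
qed

lemma ballot_div: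
  assumes "N \<ge> 1" "c2 \<le> c1"
  shows "real_of_int (c1 - c2) / real_of_int (int N) * binom (int N) c1 * binom (int N) c2 = real (card (Good N c1 c2))"
proof -
  have "real N * real (card (Good N c1 c2)) = real_of_int (c1 - c2) * binom (int N) c1 * binom (int N) c2"
    by (rule ballot[OF assms(1) assms(2)])
  moreover have "real N > 0" using assms by simp
  ultimately show ?thesis by (simp add: field_simps)
qed

lemma inner_eq:
  fixes n g i :: nat
  assumes g: "g \<ge> 3" and i: "g + 1 \<le> i" "i \<le> n - 1" and n: "n \<ge> 2"
  shows "(\<Sum>l2\<in>{0 .. int n - int i - 2}.
          \<Sum>l1\<in>{l2 + 2 .. int n - int i}.
          \<Sum>k\<in>{l1 .. int g + l2}.
          \<Sum>m\<in>{k + l1 - l2 .. int n - (int n + int g - int i) + k}.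
            let j = int n + int g - int i; k' = k + l1 - l2 in
            (real_of_int (l1 - l2) / real_of_int (int n - int i)) * binom (int n - int i) l1 * binom (int n - int i) l2
            * real (Ncount (l2, int n - int i - l2) (l1, int n - int i - l1) (k, j - k))
            * (real_of_int (l1 - l2) / real_of_int (int n - j)) * binom (int n - j) (m - k) * binom (int n - j) (m - k'))
     = real (card (Tp n i (n + g - i)))"
proof -
  define N1 where "N1 = n - i"
  define N2 where "N2 = i - g"
  have N1: "N1 \<ge> 1" and N2: "N2 \<ge> 1" and g2: "g \<ge> 2" using i n g by (auto simp: N1_def N2_def)
  have nn: "n = N1 + g + N2" and ii: "i = N2 + g" and jj: "n + g - i = N1 + g" using i n by (auto simp: N1_def N2_def)
  have h1: "int n - int i = int N1" and h2: "int n - (int n + int g - int i) = int N2"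
    and h3: "int n + int g - int i = int N1 + int g" and h4: "int n - (int N1 + int g) = int N2" using i n by (auto simp: N1_def N2_def)
  let ?F = "\<lambda>(l2,l1,k,c). real (card (Good N1 l1 l2)) * real (card (MidK g l1 l2 k)) * real (card (Good N2 c (c - (l1 - l2))))"
  have "real (card (Tp n i (n + g - i))) = (\<Sum>z\<in>Idx N1 g N2. ?F z)"
  proof -
    have tp: "Tp n i (n + g - i) = Tp n (N2 + g) (N1 + g)" using ii jj by simp
    show ?thesis unfolding tp card_Tp[OF N1 N2 g2 nn] of_nat_sum by (rule sum.cong) (auto split: prod.splits)
  qed
  also have "\<dots> = (\<Sum>l2\<in>{0..int N1 - 2}. \<Sum>l1\<in>{l2+2..int N1}. \<Sum>k\<in>{l1..int g + l2}. \<Sum>c\<in>{l1-l2..int N2}.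
       real (card (Good N1 l1 l2)) * real (card (MidK g l1 l2 k)) * real (card (Good N2 c (c - (l1 - l2)))))"
    unfolding Idx_def by (subst sum_Sigma4) auto
  finally have R: "real (card (Tp n i (n + g - i))) = \<dots>" .
  show ?thesis unfolding R h1 h2 h3 h4 Let_def
  proof (rule sum.cong[OF refl], rule sum.cong[OF refl], rule sum.cong[OF refl])
    fix l2 l1 k assume l2: "l2 \<in> {0..int N1 - 2}" and l1: "l1 \<in> {l2 + 2..int N1}" and k: "k \<in> {l1..int g + l2}"
    have lt: "l2 < l1" using l1 by simp
    have B1: "real_of_int (l1 - l2) / real_of_int (int N1) * binom (int N1) l1 * binom (int N1) l2 = real (card (Good N1 l1 l2))"
      using ballot_div[OF N1, of l2 l1] lt by simp
    have NC: "Ncount (l2, int N1 - l2) (l1, int N1 - l1) (k, int N1 + int g - k) = card (MidK g l1 l2 k)"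
      by (rule card_Nset[OF lt])
    have B2: "real_of_int (l1 - l2) / real_of_int (int N2) * binom (int N2) (m - k) * binom (int N2) (m - (k + l1 - l2))
        = real (card (Good N2 (m - k) (m - k - (l1 - l2))))" for m
      using ballot_div[OF N2, of "m - (k + l1 - l2)" "m - k"] lt by (simp add: algebra_simps)
    have "(\<Sum>m\<in>{k + l1 - l2..int N2 + k}.
           real_of_int (l1 - l2) / real_of_int (int N1) * binom (int N1) l1 * binom (int N1) l2 *
           real (Ncount (l2, int N1 - l2) (l1, int N1 - l1) (k, int N1 + int g - k)) *
           (real_of_int (l1 - l2) / real_of_int (int N2)) * binom (int N2) (m - k) * binom (int N2) (m - (k + l1 - l2)))
        = (\<Sum>m\<in>{(l1 - l2) + k..int N2 + k}. (\<lambda>c. real (card (Good N1 l1 l2)) * real (card (MidK g l1 l2 k)) * real (card (Good N2 c (c - (l1 - l2))))) (m - k))"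
    proof (rule sum.cong)
      show "{k + l1 - l2..int N2 + k} = {(l1 - l2) + k..int N2 + k}" by (simp add: algebra_simps)
    next
      fix m
      have "real_of_int (l1 - l2) / real_of_int (int N1) * binom (int N1) l1 * binom (int N1) l2 *
           real (Ncount (l2, int N1 - l2) (l1, int N1 - l1) (k, int N1 + int g - k)) *
           (real_of_int (l1 - l2) / real_of_int (int N2)) * binom (int N2) (m - k) * binom (int N2) (m - (k + l1 - l2))
          = (real_of_int (l1 - l2) / real_of_int (int N1) * binom (int N1) l1 * binom (int N1) l2) *
           real (Ncount (l2, int N1 - l2) (l1, int N1 - l1) (k, int N1 + int g - k)) *
           (real_of_int (l1 - l2) / real_of_int (int N2) * binom (int N2) (m - k) * binom (int N2) (m - (k + l1 - l2)))"
        by (simp add: algebra_simps)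
      also have "\<dots> = real (card (Good N1 l1 l2)) * real (card (MidK g l1 l2 k)) * real (card (Good N2 (m - k) (m - k - (l1 - l2))))"
        unfolding B1 NC B2 ..
      finally show "real_of_int (l1 - l2) / real_of_int (int N1) * binom (int N1) l1 * binom (int N1) l2 *
           real (Ncount (l2, int N1 - l2) (l1, int N1 - l1) (k, int N1 + int g - k)) *
           (real_of_int (l1 - l2) / real_of_int (int N2)) * binom (int N2) (m - k) * binom (int N2) (m - (k + l1 - l2))
        = (\<lambda>c. real (card (Good N1 l1 l2)) * real (card (MidK g l1 l2 k)) * real (card (Good N2 c (c - (l1 - l2))))) (m - k)"
        by simp
    qed
    also have "\<dots> = (\<Sum>c\<in>{l1 - l2..int N2}. real (card (Good N1 l1 l2)) * real (card (MidK g l1 l2 k)) * real (card (Good N2 c (c - (l1 - l2)))))"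
      by (rule sum_shift_int)
    finally show "(\<Sum>m\<in>{k + l1 - l2..int N2 + k}.
           real_of_int (l1 - l2) / real_of_int (int N1) * binom (int N1) l1 * binom (int N1) l2 *
           real (Ncount (l2, int N1 - l2) (l1, int N1 - l1) (k, int N1 + int g - k)) *
           (real_of_int (l1 - l2) / real_of_int (int N2)) * binom (int N2) (m - k) * binom (int N2) (m - (k + l1 - l2)))
        = (\<Sum>c\<in>{l1 - l2..int N2}. real (card (Good N1 l1 l2)) * real (card (MidK g l1 l2 k)) * real (card (Good N2 c (c - (l1 - l2)))))" .
  qed
qed

theorem mainTheorem8:
  fixes n g :: nat
  assumes "n \<ge> 2" and "g \<ge> 3"
  shows "real (Mo g n) =
    2 * (\<Sum>i\<in>{int g + 1 .. int n - 1}.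
          \<Sum>l2\<in>{0 .. int n - i - 2}.
          \<Sum>l1\<in>{l2 + 2 .. int n - i}.
          \<Sum>k\<in>{l1 .. int g + l2}.
          \<Sum>m\<in>{k + l1 - l2 .. int n - (int n + int g - i) + k}.
            let j = int n + int g - i; k' = k + l1 - l2 in
            (real_of_int (l1 - l2) / real_of_int (int n - i)) * binom (int n - i) l1 * binom (int n - i) l2
            * real (Ncount (l2, int n - i - l2) (l1, int n - i - l1) (k, j - k))
            * (real_of_int (l1 - l2) / real_of_int (int n - j)) * binom (int n - j) (m - k) * binom (int n - j) (m - k'))" (is "_ = 2 * sum ?f _")
proof -
  have n1: "n \<ge> 1" using assms by simp
  have "real (Mo g n) = (\<Sum>i\<in>{g+1..n-1}. real (card (Tset n i (n + g - i))))"
    unfolding card_Mo of_nat_sum ..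
  also have "\<dots> = (\<Sum>i\<in>{g+1..n-1}. 2 * real (card (Tp n i (n + g - i))))"
  proof (rule sum.cong[OF refl])
    fix i assume i: "i \<in> {g+1..n-1}"
    then have "n + g - i \<ge> 2" using assms by auto
    then show "real (card (Tset n i (n + g - i))) = 2 * real (card (Tp n i (n + g - i)))"
      using card_Tset[OF n1] by simp
  qed
  also have "\<dots> = 2 * (\<Sum>i\<in>{g+1..n-1}. ?f (int i))"
  proof -
    have "?f (int i) = real (card (Tp n i (n + g - i)))" if i: "i \<in> {g+1..n-1}" for i
      using inner_eq[of g i n] i assms by simp
    then show ?thesis by (simp add: sum_distrib_left)
  qed
  also have "(\<Sum>i\<in>{g+1..n-1}. ?f (int i)) = sum ?f (int ` {g+1..n-1})"
    by (rule sum.reindex[symmetric, unfolded comp_def]) (simp add: inj_on_def)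
  also have "int ` {g+1..n-1} = {int g + 1 .. int n - 1}"
    using n1 by (simp add: image_int_atLeastAtMost of_nat_diff)
  finally show ?thesis .
qed


end
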